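(* Let $S$ be a blocked sequence in which every symbol occurs at least twice, and let $\mathcal T$ be any derivation tree of $S$. Let $v$ be a leaf of $\mathcal T$ and let $a\ne b$ be symbols in the block $\mathcal B(v)$ of $S$. Suppose (i) $v$ is not a wingtip of $\mathcal T_{|a}$ nor of $\mathcal T_{|b}$, and (ii) $v$ is not a feather of $\mathcal T_{|a}$ nor of $\mathcal T_{|b}$. Then $a$ and $b$ are nested in $\mathcal B(v)$: there are $\{x,y\}=\{a,b\}$ such that $S$ contains an occurrence of $x$, followed later by an occurrence of $y$, both before the block $\mathcal B(v)$, and after $\mathcal B(v)$ an occurrence of $y$ followed later by an occurrence of $x$.
   Context: A block is a sequence of distinct symbols; a blocked sequence is a concatenation of blocks. Derivation trees are defined recursively for blocked sequences $S$ with $m$ blocks in which every symbol occurs at least twice. If $m=1$ ($S$ has no symbols), $\mathcal T(S)$ is a single node carrying the block. If $m=2$, $S=\beta_1\beta_2$; $\mathcal T(S)$ is a root $u$ (no block) with children $u_1,u_2$, $\mathcal B(u_q)=\beta_q$, and for every symbol $a$: crown $\mathrm{cr}_a=u$, left head $\mathrm{lhe}_a=u_1$, right head $\mathrm{rhe}_a=u_2$. If $m>2$, choose any $2\le\hat m<m$ and split $S$ into consecutive intervals $S_1\cdots S_{\hat m}$ of $m_q\ge1$ blocks. A symbol is local to $S_q$ if it occurs only in $S_q$, global otherwise. Let $\check S_q$ be $S_q$ with global symbols deleted (still $m_q$ blocks) and $\hat S'=\beta_1\cdots\beta_{\hat m}$ with $\beta_q$ the block of distinct global symbols of $S_q$.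 Recursively build derivation trees $\hat{\mathcal T}$ of $\hat S'$ and $\check{\mathcal T}_q$ of $\check S_q$; identify the root of $\check{\mathcal T}_q$ with the $q$-th leaf of $\hat{\mathcal T}$ (keeping block $\beta_q$ if $m_q\ge2$); assign the $m$ blocks of $S$ to the $m$ leaves of the resulting tree in left-to-right order; other nodes keep their blocks. Crowns and heads are inherited from $\hat{\mathcal T}$ (global symbols) or $\check{\mathcal T}_q$ (symbols local to $S_q$). For a symbol $a$, $\mathcal T_{|a}$ is the tree on $\{\mathrm{cr}_a\}\cup\{v:a\in\mathcal B(v)\}$ where the parent of a non-crown node is its nearest strict ancestor in this set. Its leftmost and rightmost leaves are the wingtips $\mathrm{lwt}_a,\mathrm{rwt}_a$. The left wing is the path in $\mathcal T_{|a}$ from $\mathrm{lhe}_a$ to $\mathrm{lwt}_a$, the right wing the path from $\mathrm{rhe}_a$ to $\mathrm{rwt}_a$. Descendants (inclusive) of $\mathrm{lhe}_a$ in $\mathcal T_{|a}$ are doves, of $\mathrm{rhe}_a$ hawks. A quill is a child (in $\mathcal T_{|a}$) of a wing node that is not itself a wing node. A feather is a leaf of $\mathcal T_{|a}$ that is the rightmost leaf descendant in $\mathcal T_{|a}$ of a dove quill, or the leftmost leaf descendant of a hawk quill. *)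

theory Defs
  imports Main "HOL-Library.List_Lexorder"
begin

text \<open>Nodes of a (finite, ordered, rooted) tree are addresses: lists of child indices.
  The root is the empty list, the children of p are p @ [i], ordered left-to-right by i.
  A tree is a node set N together with a block labelling B (None = no block).
  The left-to-right order of leaves is the lexicographic order on addresses.\<close>

type_synonym node = "nat list"

definition syms :: "'a list list \<Rightarrow> 'a set" where
  "syms S = set (concat S)"

definition blocked_twice :: "'a list list \<Rightarrow> bool" where
  "blocked_twice S \<longleftrightarrow> (\<forall>\<beta>\<in>set S. distinct \<beta>) \<and> (\<forall>a\<in>syms S. 2 \<le> count_list (concat S) a)"

definition tleaves :: "node set \<Rightarrow> node set" where
  "tleaves N = {p\<in>N. \<forall>i. p @ [i] \<notin> N}"

definition leaf_list :: "node set \<Rightarrow> node list" where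
  "leaf_list N = sorted_list_of_set (tleaves N)"

definition is_global :: "'a list list list \<Rightarrow> 'a \<Rightarrow> bool" where
  "is_global Ss a \<longleftrightarrow> (\<exists>q1<length Ss. \<exists>q2<length Ss. q1 \<noteq> q2 \<and> a \<in> syms (Ss!q1) \<and> a \<in> syms (Ss!q2))"

definition strict_anc :: "node \<Rightarrow> node \<Rightarrow> bool" where
  "strict_anc u v \<longleftrightarrow> (\<exists>w. w \<noteq> [] \<and> v = u @ w)"

text \<open>deriv S N B cr lhe rhe: (N,B) with crown / left head / right head maps cr, lhe, rhe
  is a derivation tree of S (the maps are only constrained on symbols of S).\<close>
inductive deriv :: "'a list list \<Rightarrow> node set \<Rightarrow> (node \<Rightarrow> 'a list option)
    \<Rightarrow> ('a \<Rightarrow> node) \<Rightarrow> ('a \<Rightarrow> node) \<Rightarrow> ('a \<Rightarrow> node) \<Rightarrow> bool" where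
  one: "blocked_twice [\<beta>] \<Longrightarrow>
    deriv [\<beta>] {[]} (\<lambda>p. if p = [] then Some \<beta> else None) cr lhe rhe"
| two: "blocked_twice [\<beta>1, \<beta>2] \<Longrightarrow>
    \<forall>a\<in>syms [\<beta>1, \<beta>2]. cr a = [] \<and> lhe a = [0] \<and> rhe a = [1] \<Longrightarrow>
    deriv [\<beta>1, \<beta>2] {[], [0], [1]}
      (\<lambda>p. if p = [0] then Some \<beta>1 else if p = [1] then Some \<beta>2 else None) cr lhe rhe"
| split: "\<lbrakk> blocked_twice S; 2 < length S;
    concat Ss = S; 2 \<le> length Ss; length Ss < length S; \<forall>q<length Ss. Ss!q \<noteq> [];
    length Sh = length Ss;
    \<forall>q<length Ss. distinct (Sh!q) \<and> set (Sh!q) = {a\<in>syms (Ss!q). is_global Ss a};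
    deriv Sh Nh Bh crh lheh rheh;
    \<forall>q<length Ss. deriv (map (filter (\<lambda>a. \<not> is_global Ss a)) (Ss!q))
                         (Nc q) (Bc q) (crc q) (lhec q) (rhec q);
    length (leaf_list Nh) = length Ss;
    N = Nh \<union> (\<Union>q<length Ss. (\<lambda>w. leaf_list Nh ! q @ w) ` Nc q);
    length (leaf_list N) = length S;
    \<forall>p. p \<notin> N \<longrightarrow> B p = None;
    \<forall>i<length S. B (leaf_list N ! i) = Some (S!i);
    \<forall>p\<in>Nh. p \<notin> tleaves N \<longrightarrow> B p = Bh p;
    \<forall>q<length Ss. \<forall>w\<in>Nc q. w \<noteq> [] \<and> leaf_list Nh ! q @ w \<notin> tleaves N \<longrightarrow>
        B (leaf_list Nh ! q @ w) = Bc q w;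
    \<forall>a\<in>syms S. is_global Ss a \<longrightarrow> cr a = crh a \<and> lhe a = lheh a \<and> rhe a = rheh a;
    \<forall>q<length Ss. \<forall>a\<in>syms (Ss!q). \<not> is_global Ss a \<longrightarrow>
        cr a = leaf_list Nh ! q @ crc q a \<and> lhe a = leaf_list Nh ! q @ lhec q a \<and>
        rhe a = leaf_list Nh ! q @ rhec q a \<rbrakk>
   \<Longrightarrow> deriv S N B cr lhe rhe"

definition inblk :: "node set \<Rightarrow> (node \<Rightarrow> 'a list option) \<Rightarrow> 'a \<Rightarrow> node \<Rightarrow> bool" where
  "inblk N B a v \<longleftrightarrow> v \<in> N \<and> (\<exists>\<beta>. B v = Some \<beta> \<and> a \<in> set \<beta>)"

definition rnodes :: "node set \<Rightarrow> (node \<Rightarrow> 'a list option) \<Rightarrow> ('a \<Rightarrow> node) \<Rightarrow> 'a \<Rightarrow> node set" where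
  "rnodes N B cr a = insert (cr a) {v. inblk N B a v}"

text \<open>rpar N B cr a u v: u is the parent of v in T|a.\<close>
definition rpar :: "node set \<Rightarrow> (node \<Rightarrow> 'a list option) \<Rightarrow> ('a \<Rightarrow> node) \<Rightarrow> 'a \<Rightarrow> node \<Rightarrow> node \<Rightarrow> bool" where
  "rpar N B cr a u v \<longleftrightarrow> u \<in> rnodes N B cr a \<and> v \<in> rnodes N B cr a \<and> v \<noteq> cr a \<and>
     strict_anc u v \<and> \<not> (\<exists>w\<in>rnodes N B cr a. strict_anc u w \<and> strict_anc w v)"

definition rdesc :: "node set \<Rightarrow> (node \<Rightarrow> 'a list option) \<Rightarrow> ('a \<Rightarrow> node) \<Rightarrow> 'a \<Rightarrow> node \<Rightarrow> node \<Rightarrow> bool" where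
  "rdesc N B cr a = (rpar N B cr a)\<^sup>*\<^sup>*"

definition rleaf :: "node set \<Rightarrow> (node \<Rightarrow> 'a list option) \<Rightarrow> ('a \<Rightarrow> node) \<Rightarrow> 'a \<Rightarrow> node \<Rightarrow> bool" where
  "rleaf N B cr a v \<longleftrightarrow> v \<in> rnodes N B cr a \<and> \<not> (\<exists>w. rpar N B cr a v w)"

definition lwt :: "node set \<Rightarrow> (node \<Rightarrow> 'a list option) \<Rightarrow> ('a \<Rightarrow> node) \<Rightarrow> 'a \<Rightarrow> node" where
  "lwt N B cr a = Min {v. rleaf N B cr a v}"

definition rwt :: "node set \<Rightarrow> (node \<Rightarrow> 'a list option) \<Rightarrow> ('a \<Rightarrow> node) \<Rightarrow> 'a \<Rightarrow> node" where
  "rwt N B cr a = Max {v. rleaf N B cr a v}"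

definition lwing :: "node set \<Rightarrow> (node \<Rightarrow> 'a list option) \<Rightarrow> ('a \<Rightarrow> node) \<Rightarrow> ('a \<Rightarrow> node) \<Rightarrow> 'a \<Rightarrow> node set" where
  "lwing N B cr lhe a = {w. rdesc N B cr a (lhe a) w \<and> rdesc N B cr a w (lwt N B cr a)}"

definition rwing :: "node set \<Rightarrow> (node \<Rightarrow> 'a list option) \<Rightarrow> ('a \<Rightarrow> node) \<Rightarrow> ('a \<Rightarrow> node) \<Rightarrow> 'a \<Rightarrow> node set" where
  "rwing N B cr rhe a = {w. rdesc N B cr a (rhe a) w \<and> rdesc N B cr a w (rwt N B cr a)}"

definition quill :: "node set \<Rightarrow> (node \<Rightarrow> 'a list option) \<Rightarrow> ('a \<Rightarrow> node) \<Rightarrow> ('a \<Rightarrow> node) \<Rightarrow> ('a \<Rightarrow> node) \<Rightarrow> 'a \<Rightarrow> node \<Rightarrow> bool" where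
  "quill N B cr lhe rhe a u \<longleftrightarrow>
     (\<exists>w \<in> lwing N B cr lhe a \<union> rwing N B cr rhe a. rpar N B cr a w u) \<and>
     u \<notin> lwing N B cr lhe a \<union> rwing N B cr rhe a"

definition feather :: "node set \<Rightarrow> (node \<Rightarrow> 'a list option) \<Rightarrow> ('a \<Rightarrow> node) \<Rightarrow> ('a \<Rightarrow> node) \<Rightarrow> ('a \<Rightarrow> node) \<Rightarrow> 'a \<Rightarrow> node \<Rightarrow> bool" where
  "feather N B cr lhe rhe a v \<longleftrightarrow> rleaf N B cr a v \<and>
     ((\<exists>u. quill N B cr lhe rhe a u \<and> rdesc N B cr a (lhe a) u \<and>
           v = Max {l. rleaf N B cr a l \<and> rdesc N B cr a u l}) \<or>
      (\<exists>u. quill N B cr lhe rhe a u \<and> rdesc N B cr a (rhe a) u \<and>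
           v = Min {l. rleaf N B cr a l \<and> rdesc N B cr a u l}))"

definition followed :: "'a list \<Rightarrow> 'a \<Rightarrow> 'a \<Rightarrow> bool" where
  "followed xs x y \<longleftrightarrow> (\<exists>p q. p < q \<and> q < length xs \<and> xs!p = x \<and> xs!q = y)"

definition nested :: "'a list list \<Rightarrow> nat \<Rightarrow> 'a \<Rightarrow> 'a \<Rightarrow> bool" where
  "nested S i a b \<longleftrightarrow> (\<exists>x y. {x, y} = {a, b} \<and>
     followed (concat (take i S)) x y \<and> followed (concat (drop (Suc i) S)) y x)"

end

theory Submission
  imports Defs "HOL-Library.Sublist"
begin

lemma strict_anc_iff: "strict_anc u v \<longleftrightarrow> strict_prefix u v"
  unfolding strict_anc_def strict_prefix_def prefix_def by auto

lemma app_less_iff: "(u @ x < u @ (y::nat list)) \<longleftrightarrow> x < y"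
  by (induction u) auto

lemma app_le_iff: "(u @ x \<le> u @ (y::nat list)) \<longleftrightarrow> x \<le> y"
  by (induction u) auto

lemma prefix_less: "strict_prefix u (v::nat list) \<Longrightarrow> u < v"
proof -
  assume "strict_prefix u v"
  then obtain zs where "v = u @ zs" "zs \<noteq> []" by (auto simp: strict_prefix_def prefix_def)
  moreover have "u @ [] < u @ zs" using \<open>zs \<noteq> []\<close> by (simp only: app_less_iff) (auto simp: neq_Nil_conv)
  ultimately show "u < v" by simp
qed

lemma interval_prefix:
  "prefix u (x::nat list) \<Longrightarrow> prefix u z \<Longrightarrow> x \<le> y \<Longrightarrow> y \<le> z \<Longrightarrow> prefix u y"
proof (induction u arbitrary: x y z)
  case Nil then show ?case by simp
next
  case (Cons c u)
  then obtain x' z' where xz: "x = c # x'" "z = c # z'" by (auto simp: prefix_def)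
  show ?case
  proof (cases y)
    case Nil then show ?thesis using Cons.prems xz by simp
  next
    case (Cons d y')
    have "c = d \<and> x' \<le> y' \<and> y' \<le> z'" using Cons.prems(3,4) xz Cons by auto
    moreover have "prefix u x'" "prefix u z'" using Cons.prems xz by auto
    ultimately have "prefix u y'" using Cons.IH by blast
    then show ?thesis using Cons \<open>c = d \<and> x' \<le> y' \<and> y' \<le> z'\<close> by simp
  qed
qed


lemma incomparable_less:
  "(u::nat list) < v \<Longrightarrow> \<not> prefix u v \<Longrightarrow> u @ x < v @ y"
proof (induction u arbitrary: v)
  case Nil then show ?case by simp
next
  case (Cons c u)
  then obtain d v' where v: "v = d # v'" by (cases v) auto
  show ?case
  proof (cases "c = d")
    case True
    with Cons.prems v have "u < v'" "\<not> prefix u v'" by auto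
    with Cons.IH have "u @ x < v' @ y" by blast
    with True v show ?thesis by simp
  next
    case False
    with Cons.prems v have "c < d" by auto
    with v show ?thesis by simp
  qed
qed

lemma sibling_less: "(i::nat) < j \<Longrightarrow> prefix (u @ [i]) x \<Longrightarrow> prefix (u @ [j]) y \<Longrightarrow> x < y"
proof -
  assume "i < j" "prefix (u @ [i]) x" "prefix (u @ [j]) y"
  then obtain x' y' where "x = u @ i # x'" "y = u @ j # y'" by (auto simp: prefix_def)
  with \<open>i<j\<close> show "x < y" by (simp add: app_less_iff)
qed

lemma distinct_count: "distinct xs \<Longrightarrow> count_list xs a \<le> 1"
  by (induction xs) auto

lemma bt_one: "blocked_twice [\<beta>] \<Longrightarrow> set \<beta> = {}"
proof -
  assume h: "blocked_twice [\<beta>]"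
  show ?thesis
  proof (rule equals0I)
    fix a assume "a \<in> set \<beta>"
    then have "2 \<le> count_list \<beta> a" using h by (auto simp: blocked_twice_def syms_def)
    moreover have "count_list \<beta> a \<le> 1" using h distinct_count by (auto simp: blocked_twice_def)
    ultimately show False by simp
  qed
qed

lemma bt_two: "blocked_twice [\<beta>1, \<beta>2] \<Longrightarrow> a \<in> syms [\<beta>1, \<beta>2] \<Longrightarrow> a \<in> set \<beta>1 \<and> a \<in> set \<beta>2"
proof -
  assume h: "blocked_twice [\<beta>1, \<beta>2]" "a \<in> syms [\<beta>1, \<beta>2]"
  then have "2 \<le> count_list \<beta>1 a + count_list \<beta>2 a" by (auto simp: blocked_twice_def)
  moreover have "count_list \<beta>1 a \<le> 1" "count_list \<beta>2 a \<le> 1" using h(1) distinct_count by (auto simp: blocked_twice_def)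
  ultimately have "count_list \<beta>1 a \<noteq> 0" "count_list \<beta>2 a \<noteq> 0" by auto
  then show ?thesis by (simp add: count_list_0_iff)
qed

definition treeinv :: "node set \<Rightarrow> bool" where
  "treeinv N \<longleftrightarrow> finite N \<and> [] \<in> N \<and> (\<forall>p q. p @ q \<in> N \<longrightarrow> p \<in> N)"

lemma treeinv_prefix: "treeinv N \<Longrightarrow> x \<in> N \<Longrightarrow> prefix p x \<Longrightarrow> p \<in> N"
  unfolding treeinv_def prefix_def by blast

lemma leaf_no_desc: "treeinv N \<Longrightarrow> l \<in> tleaves N \<Longrightarrow> x \<in> N \<Longrightarrow> prefix l x \<Longrightarrow> x = l"
proof (rule ccontr)
  assume h: "treeinv N" "l \<in> tleaves N" "x \<in> N" "prefix l x" "x \<noteq> l"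
  then obtain zs where "x = l @ zs" "zs \<noteq> []" by (auto simp: prefix_def)
  then obtain c r where "x = l @ c # r" by (cases zs) auto
  then have "(l @ [c]) @ r \<in> N" using h(3) by simp
  then have "l @ [c] \<in> N" using h(1) unfolding treeinv_def by blast
  with h(2) show False by (auto simp: tleaves_def)
qed

lemma tleaves_sub: "tleaves N \<subseteq> N" by (auto simp: tleaves_def)

lemma leaf_list_props:
  assumes "finite N"
  shows "set (leaf_list N) = tleaves N" "sorted_wrt (<) (leaf_list N)" "distinct (leaf_list N)"
proof -
  have f: "finite (tleaves N)" using assms finite_subset tleaves_sub by blast
  show "set (leaf_list N) = tleaves N" unfolding leaf_list_def using f by simp
  show "sorted_wrt (<) (leaf_list N)" unfolding leaf_list_def by (rule strict_sorted_list_of_set)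
  show "distinct (leaf_list N)" unfolding leaf_list_def by simp
qed

lemma leaf_list_eqI:
  assumes "finite N" "sorted_wrt (<) xs" "set xs = tleaves N"
  shows "leaf_list N = xs"
proof -
  have "sorted_wrt (<) (leaf_list N)" "set (leaf_list N) = tleaves N" using leaf_list_props assms(1) by auto
  then show ?thesis using strict_sorted_equal assms by metis
qed

lemma leaf_list_index_less:
  assumes "finite N" "i < length (leaf_list N)" "j < length (leaf_list N)"
  shows "leaf_list N ! i < leaf_list N ! j \<longleftrightarrow> i < j"
proof -
  have s: "sorted_wrt (<) (leaf_list N)" using leaf_list_props assms(1) by auto
  show ?thesis
  proof
    assume "leaf_list N ! i < leaf_list N ! j"
    show "i < j"
    proof (rule ccontr)
      assume "\<not> i < j"
      then have "j < i \<or> j = i" by auto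
      then show False
      proof
        assume "j < i"
        then have "leaf_list N ! j < leaf_list N ! i" using s assms sorted_wrt_nth_less by blast
        with \<open>leaf_list N ! i < leaf_list N ! j\<close> show False by simp
      next
        assume "j = i" with \<open>leaf_list N ! i < leaf_list N ! j\<close> show False by simp
      qed
    qed
  next
    assume "i < j" then show "leaf_list N ! i < leaf_list N ! j" using s assms sorted_wrt_nth_less by blast
  qed
qed

definition LA :: "node set \<Rightarrow> (node \<Rightarrow> 'a list option) \<Rightarrow> ('a \<Rightarrow> node) \<Rightarrow> 'a \<Rightarrow> 'a \<Rightarrow> node \<Rightarrow> bool" where
  "LA N B cr a b v \<longleftrightarrow> cr a = cr b \<and>
     (\<forall>x. prefix x v \<longrightarrow> strict_prefix (cr a) x \<longrightarrow> (inblk N B a x \<longleftrightarrow> inblk N B b x))"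

definition LB :: "node set \<Rightarrow> (node \<Rightarrow> 'a list option) \<Rightarrow> ('a \<Rightarrow> node) \<Rightarrow> 'a \<Rightarrow> 'a \<Rightarrow> node \<Rightarrow> bool" where
  "LB N B cr a b v \<longleftrightarrow> (\<exists>p g. strict_prefix p g \<and> prefix g v \<and> inblk N B a p \<and>
     prefix p (cr b) \<and> strict_prefix (cr b) g \<and>
     (\<forall>x. strict_prefix p x \<longrightarrow> strict_prefix x g \<longrightarrow> \<not> inblk N B a x) \<and>
     (\<forall>x. prefix g x \<longrightarrow> prefix x v \<longrightarrow> (inblk N B a x \<longleftrightarrow> inblk N B b x)))"

definition LAM :: "node set \<Rightarrow> (node \<Rightarrow> 'a list option) \<Rightarrow> ('a \<Rightarrow> node) \<Rightarrow> 'a \<Rightarrow> 'a \<Rightarrow> node \<Rightarrow> bool" where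
  "LAM N B cr a b v \<longleftrightarrow> LA N B cr a b v \<or> LB N B cr a b v \<or> LB N B cr b a v"

definition INV :: "'a list list \<Rightarrow> node set \<Rightarrow> (node \<Rightarrow> 'a list option)
    \<Rightarrow> ('a \<Rightarrow> node) \<Rightarrow> ('a \<Rightarrow> node) \<Rightarrow> ('a \<Rightarrow> node) \<Rightarrow> bool" where
  "INV S N B cr lhe rhe \<longleftrightarrow> treeinv N \<and>
    (\<forall>p. B p \<noteq> None \<longrightarrow> p \<in> N) \<and>
    (\<forall>p \<beta>. B p = Some \<beta> \<longrightarrow> set \<beta> \<subseteq> syms S) \<and>
    length (leaf_list N) = length S \<and> (\<forall>i<length S. B (leaf_list N ! i) = Some (S!i)) \<and>
    (\<forall>a\<in>syms S. lhe a = cr a @ [0] \<and> rhe a = cr a @ [1] \<and> inblk N B a (lhe a) \<and> inblk N B a (rhe a)) \<and>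
    (\<forall>a p. inblk N B a p \<longrightarrow> prefix (cr a @ [0]) p \<or> prefix (cr a @ [1]) p) \<and>
    (\<forall>a p. inblk N B a p \<longrightarrow> (\<exists>l\<in>tleaves N. prefix p l \<and> inblk N B a l)) \<and>
    (\<forall>a b v. v \<in> tleaves N \<longrightarrow> a \<noteq> b \<longrightarrow> inblk N B a v \<longrightarrow> inblk N B b v \<longrightarrow> LAM N B cr a b v)"

lemma INV_one:
  assumes "blocked_twice [\<beta>]"
  shows "INV [\<beta>] {[]} (\<lambda>p. if p = [] then Some \<beta> else None) cr lhe rhe"
proof -
  have e0: "set \<beta> = {}" using bt_one assms .
  then have e: "\<beta> = []" by simp
  have tl: "tleaves {[]} = {[]}" by (auto simp: tleaves_def)
  have ll: "leaf_list {[]} = [[]]" unfolding leaf_list_def tl by simp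
  have sy: "syms [\<beta>] = {}" using e by (simp add: syms_def)
  have ni: "\<not> inblk {[]} (\<lambda>p. if p = [] then Some \<beta> else None) a p" for a p
    using e by (auto simp: inblk_def)
  show ?thesis unfolding INV_def using ni
    by (auto simp: treeinv_def ll sy e syms_def)
qed

lemma tl_two: "tleaves {[], [0], [1::nat]} = {[0], [1]}"
  by (auto simp: tleaves_def)

lemma ll_two: "leaf_list {[], [0], [1::nat]} = [[0], [1]]"
proof -
  have "finite {[], [0], [1::nat]}" by simp
  moreover have "sorted_wrt (<) [[0::nat], [1]]" by simp
  moreover have "set [[0::nat], [1]] = tleaves {[], [0], [1::nat]}" using tl_two by simp
  ultimately show ?thesis by (rule leaf_list_eqI)
qed

lemma ll_two': "leaf_list {[], [0], [Suc 0]} = [[0], [Suc 0]]"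
  using ll_two by simp

lemma INV_two:
  assumes "blocked_twice [\<beta>1, \<beta>2]"
    and cr: "\<forall>a\<in>syms [\<beta>1, \<beta>2]. cr a = [] \<and> lhe a = [0] \<and> rhe a = [1]"
  shows "INV [\<beta>1, \<beta>2] {[], [0], [1]}
      (\<lambda>p. if p = [0] then Some \<beta>1 else if p = [1] then Some \<beta>2 else None) cr lhe rhe"
proof -
  let ?B = "(\<lambda>p. if p = [0] then Some \<beta>1 else if p = [1::nat] then Some \<beta>2 else None)"
  let ?N = "{[], [0], [1::nat]}"
  have ib: "inblk ?N ?B a p \<longleftrightarrow> (p = [0] \<and> a \<in> set \<beta>1) \<or> (p = [1] \<and> a \<in> set \<beta>2)" for a p
    by (auto simp: inblk_def)
  have sy: "a \<in> syms [\<beta>1, \<beta>2] \<longleftrightarrow> a \<in> set \<beta>1 \<or> a \<in> set \<beta>2" for a by (simp add: syms_def)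
  have both: "a \<in> set \<beta>1 \<longleftrightarrow> a \<in> set \<beta>2" for a using bt_two[OF assms(1)] sy by blast
  have t: "treeinv ?N"
    by (auto simp: treeinv_def append_eq_Cons_conv)
  have lam: "LAM ?N ?B cr a b v" if "v \<in> tleaves ?N" "inblk ?N ?B a v" "inblk ?N ?B b v" for a b v
  proof -
    have "a \<in> syms [\<beta>1, \<beta>2]" "b \<in> syms [\<beta>1, \<beta>2]" using that ib sy by auto
    then have c: "cr a = []" "cr b = []" using cr by auto
    have v: "v = [0] \<or> v = [1]" using that tl_two by auto
    have "LA ?N ?B cr a b v" unfolding LA_def
    proof (intro conjI allI impI)
      show "cr a = cr b" using c by simp
      fix x assume "prefix x v" "strict_prefix (cr a) x"
      then have "x = v" using v c by (auto simp: prefix_Cons strict_prefix_def)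
      then show "inblk ?N ?B a x \<longleftrightarrow> inblk ?N ?B b x" using that by simp
    qed
    then show ?thesis by (simp add: LAM_def)
  qed
  show ?thesis unfolding INV_def
  proof (intro conjI allI impI ballI)
    show "treeinv ?N" by (rule t)
  next
    fix p assume "?B p \<noteq> None" then show "p \<in> ?N" by (auto split: if_splits)
  next
    fix p \<beta> assume "?B p = Some \<beta>" then show "set \<beta> \<subseteq> syms [\<beta>1, \<beta>2]" by (auto simp: syms_def split: if_splits)
  next
    show "length (leaf_list ?N) = length [\<beta>1, \<beta>2]" by (subst ll_two) simp
  next
    fix i assume "i < length [\<beta>1, \<beta>2]" then show "?B (leaf_list ?N ! i) = Some ([\<beta>1, \<beta>2] ! i)"
      by (auto simp: less_Suc_eq ll_two ll_two')
  next
    fix a assume a: "a \<in> syms [\<beta>1, \<beta>2]"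
    then have "a \<in> set \<beta>1" "a \<in> set \<beta>2" using sy both by auto
    then show "lhe a = cr a @ [0]" "rhe a = cr a @ [1]" "inblk ?N ?B a (lhe a)" "inblk ?N ?B a (rhe a)"
      using cr a ib by auto
  next
    fix a p assume "inblk ?N ?B a p"
    then have "a \<in> syms [\<beta>1, \<beta>2]" "p = [0] \<or> p = [1]" using ib sy by auto
    then show "prefix (cr a @ [0]) p \<or> prefix (cr a @ [1]) p" using cr by auto
  next
    fix a p assume h: "inblk ?N ?B a p"
    then have "p = [0] \<or> p = [1]" using ib by auto
    then have "p \<in> tleaves ?N" using tl_two by auto
    then show "\<exists>l\<in>tleaves ?N. prefix p l \<and> inblk ?N ?B a l" using h by blast
  next
    fix a b v assume "v \<in> tleaves ?N" "a \<noteq> b" "inblk ?N ?B a v" "inblk ?N ?B b v"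
    then show "LAM ?N ?B cr a b v" using lam by blast
  qed
qed


lemma sorted_wrt_concat_idx:
  assumes "\<forall>xs\<in>set xss. sorted_wrt R xs"
    and "\<forall>i j. i < j \<longrightarrow> j < length xss \<longrightarrow> (\<forall>x\<in>set (xss!i). \<forall>y\<in>set (xss!j). R x y)"
  shows "sorted_wrt R (concat xss)"
  using assms
proof (induction xss)
  case Nil then show ?case by simp
next
  case (Cons xs xss)
  have "sorted_wrt R (concat xss)"
  proof (rule Cons.IH)
    show "\<forall>xs\<in>set xss. sorted_wrt R xs" using Cons.prems(1) by simp
    show "\<forall>i j. i < j \<longrightarrow> j < length xss \<longrightarrow> (\<forall>x\<in>set (xss ! i). \<forall>y\<in>set (xss ! j). R x y)"
    proof (intro allI impI ballI)
      fix i j x y assume "i < j" "j < length xss" "x \<in> set (xss ! i)" "y \<in> set (xss ! j)"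
      then show "R x y" using Cons.prems(2)[rule_format, of "Suc i" "Suc j"] by simp
    qed
  qed
  moreover have "\<forall>x\<in>set xs. \<forall>y\<in>set (concat xss). R x y"
  proof (intro ballI)
    fix x y assume "x \<in> set xs" "y \<in> set (concat xss)"
    then obtain zs where "zs \<in> set xss" "y \<in> set zs" by auto
    then obtain j where "j < length xss" "y \<in> set (xss!j)" by (auto simp: in_set_conv_nth)
    then show "R x y" using Cons.prems(2)[rule_format, of 0 "Suc j"] \<open>x \<in> set xs\<close> by simp
  qed
  ultimately show ?case using Cons.prems(1) by (simp add: sorted_wrt_append)
qed

lemma concat_nth_pair:
  assumes "length xss = length yss" "\<forall>k<length xss. length (xss!k) = length (yss!k)"
    "k < length xss" "j < length (xss!k)"
  shows "\<exists>i<length (concat xss). concat xss ! i = xss!k!j \<and> concat yss ! i = yss!k!j"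
  using assms
proof (induction xss arbitrary: yss k)
  case Nil then show ?case by simp
next
  case (Cons xs xss)
  then obtain ys yss' where y: "yss = ys # yss'" by (cases yss) auto
  have lxy: "length xs = length ys" using Cons.prems(2) y by auto
  show ?case
  proof (cases k)
    case 0
    then have "j < length xs" using Cons.prems by simp
    then show ?thesis using 0 y lxy by (intro exI[of _ j]) (auto simp: nth_append)
  next
    case (Suc k')
    have "\<exists>i<length (concat xss). concat xss ! i = xss!k'!j \<and> concat yss' ! i = yss'!k'!j"
    proof (rule Cons.IH)
      show "length xss = length yss'" using Cons.prems(1) y by simp
      show "\<forall>k<length xss. length (xss ! k) = length (yss' ! k)"
        using Cons.prems(2) y by (metis Suc_less_eq length_Cons nth_Cons_Suc)
      show "k' < length xss" using Cons.prems(3) Suc by simp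
      show "j < length (xss ! k')" using Cons.prems(4) Suc by simp
    qed
    then obtain i where "i < length (concat xss)" "concat xss ! i = xss!k'!j" "concat yss' ! i = yss'!k'!j" by blast
    then show ?thesis using Suc y lxy
      by (intro exI[of _ "length xs + i"]) (auto simp: nth_append)
  qed
qed

locale SP =
  fixes S :: "'a list list" and Ss :: "'a list list list" and Sh :: "'a list list"
    and Nh :: "node set" and Bh :: "node \<Rightarrow> 'a list option" and crh lheh rheh :: "'a \<Rightarrow> node"
    and Nc :: "nat \<Rightarrow> node set" and Bc :: "nat \<Rightarrow> node \<Rightarrow> 'a list option"
    and crc lhec rhec :: "nat \<Rightarrow> 'a \<Rightarrow> node"
    and N :: "node set" and B :: "node \<Rightarrow> 'a list option" and cr lhe rhe :: "'a \<Rightarrow> node"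
  assumes bt: "blocked_twice S" and len3: "2 < length S"
    and cc: "concat Ss = S" and m2: "2 \<le> length Ss" and mlt: "length Ss < length S"
    and nonempty: "\<forall>q<length Ss. Ss!q \<noteq> []"
    and lsh: "length Sh = length Ss"
    and shq: "\<forall>q<length Ss. distinct (Sh!q) \<and> set (Sh!q) = {a\<in>syms (Ss!q). is_global Ss a}"
    and IHh: "INV Sh Nh Bh crh lheh rheh"
    and IHc: "\<forall>q<length Ss. INV (map (filter (\<lambda>a. \<not> is_global Ss a)) (Ss!q))
                         (Nc q) (Bc q) (crc q) (lhec q) (rhec q)"
    and llh: "length (leaf_list Nh) = length Ss"
    and Ndef: "N = Nh \<union> (\<Union>q<length Ss. (\<lambda>w. leaf_list Nh ! q @ w) ` Nc q)"
    and lln: "length (leaf_list N) = length S"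
    and Bnone: "\<forall>p. p \<notin> N \<longrightarrow> B p = None"
    and Bleaf: "\<forall>i<length S. B (leaf_list N ! i) = Some (S!i)"
    and BBh: "\<forall>p\<in>Nh. p \<notin> tleaves N \<longrightarrow> B p = Bh p"
    and BBc: "\<forall>q<length Ss. \<forall>w\<in>Nc q. w \<noteq> [] \<and> leaf_list Nh ! q @ w \<notin> tleaves N \<longrightarrow>
        B (leaf_list Nh ! q @ w) = Bc q w"
    and crg: "\<forall>a\<in>syms S. is_global Ss a \<longrightarrow> cr a = crh a \<and> lhe a = lheh a \<and> rhe a = rheh a"
    and crl: "\<forall>q<length Ss. \<forall>a\<in>syms (Ss!q). \<not> is_global Ss a \<longrightarrow>
        cr a = leaf_list Nh ! q @ crc q a \<and> lhe a = leaf_list Nh ! q @ lhec q a \<and>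
        rhe a = leaf_list Nh ! q @ rhec q a"
begin

abbreviation "m \<equiv> length Ss"
abbreviation "L q \<equiv> leaf_list Nh ! q"
abbreviation "glob \<equiv> is_global Ss"
abbreviation "Sc q \<equiv> map (filter (\<lambda>a. \<not> is_global Ss a)) (Ss!q)"

lemma Ih: "treeinv Nh" "\<forall>p. Bh p \<noteq> None \<longrightarrow> p \<in> Nh" "\<forall>p \<beta>. Bh p = Some \<beta> \<longrightarrow> set \<beta> \<subseteq> syms Sh"
  "length (leaf_list Nh) = length Sh" "\<forall>i<length Sh. Bh (leaf_list Nh ! i) = Some (Sh!i)"
  "\<forall>a\<in>syms Sh. lheh a = crh a @ [0] \<and> rheh a = crh a @ [1] \<and> inblk Nh Bh a (lheh a) \<and> inblk Nh Bh a (rheh a)"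
  "\<forall>a p. inblk Nh Bh a p \<longrightarrow> prefix (crh a @ [0]) p \<or> prefix (crh a @ [1]) p"
  "\<forall>a p. inblk Nh Bh a p \<longrightarrow> (\<exists>l\<in>tleaves Nh. prefix p l \<and> inblk Nh Bh a l)"
  "\<forall>a b v. v \<in> tleaves Nh \<longrightarrow> a \<noteq> b \<longrightarrow> inblk Nh Bh a v \<longrightarrow> inblk Nh Bh b v \<longrightarrow> LAM Nh Bh crh a b v"
  using IHh unfolding INV_def by (auto simp del: One_nat_def)

lemma Ic: assumes "q < m" shows "treeinv (Nc q)" "\<forall>p. Bc q p \<noteq> None \<longrightarrow> p \<in> Nc q"
  "\<forall>p \<beta>. Bc q p = Some \<beta> \<longrightarrow> set \<beta> \<subseteq> syms (Sc q)"
  "length (leaf_list (Nc q)) = length (Sc q)" "\<forall>i<length (Sc q). Bc q (leaf_list (Nc q) ! i) = Some (Sc q!i)"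
  "\<forall>a\<in>syms (Sc q). lhec q a = crc q a @ [0] \<and> rhec q a = crc q a @ [1] \<and> inblk (Nc q) (Bc q) a (lhec q a) \<and> inblk (Nc q) (Bc q) a (rhec q a)"
  "\<forall>a p. inblk (Nc q) (Bc q) a p \<longrightarrow> prefix (crc q a @ [0]) p \<or> prefix (crc q a @ [1]) p"
  "\<forall>a p. inblk (Nc q) (Bc q) a p \<longrightarrow> (\<exists>l\<in>tleaves (Nc q). prefix p l \<and> inblk (Nc q) (Bc q) a l)"
  "\<forall>a b v. v \<in> tleaves (Nc q) \<longrightarrow> a \<noteq> b \<longrightarrow> inblk (Nc q) (Bc q) a v \<longrightarrow> inblk (Nc q) (Bc q) b v \<longrightarrow> LAM (Nc q) (Bc q) (crc q) a b v"
proof -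
  have "INV (Sc q) (Nc q) (Bc q) (crc q) (lhec q) (rhec q)" using IHc assms by blast
  then show "treeinv (Nc q)" "\<forall>p. Bc q p \<noteq> None \<longrightarrow> p \<in> Nc q"
  "\<forall>p \<beta>. Bc q p = Some \<beta> \<longrightarrow> set \<beta> \<subseteq> syms (Sc q)"
  "length (leaf_list (Nc q)) = length (Sc q)" "\<forall>i<length (Sc q). Bc q (leaf_list (Nc q) ! i) = Some (Sc q!i)"
  "\<forall>a\<in>syms (Sc q). lhec q a = crc q a @ [0] \<and> rhec q a = crc q a @ [1] \<and> inblk (Nc q) (Bc q) a (lhec q a) \<and> inblk (Nc q) (Bc q) a (rhec q a)"
  "\<forall>a p. inblk (Nc q) (Bc q) a p \<longrightarrow> prefix (crc q a @ [0]) p \<or> prefix (crc q a @ [1]) p"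
  "\<forall>a p. inblk (Nc q) (Bc q) a p \<longrightarrow> (\<exists>l\<in>tleaves (Nc q). prefix p l \<and> inblk (Nc q) (Bc q) a l)"
  "\<forall>a b v. v \<in> tleaves (Nc q) \<longrightarrow> a \<noteq> b \<longrightarrow> inblk (Nc q) (Bc q) a v \<longrightarrow> inblk (Nc q) (Bc q) b v \<longrightarrow> LAM (Nc q) (Bc q) (crc q) a b v"
    unfolding INV_def by blast+
qed

lemma finNh: "finite Nh" using Ih(1) by (simp add: treeinv_def)

lemma Lin: "q < m \<Longrightarrow> L q \<in> tleaves Nh"
  using leaf_list_props(1)[OF finNh] llh by (metis nth_mem)

lemma LinNh: "q < m \<Longrightarrow> L q \<in> Nh" using Lin tleaves_sub by blast

lemma Linj: "q < m \<Longrightarrow> q' < m \<Longrightarrow> L q = L q' \<Longrightarrow> q = q'"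
  using leaf_list_props(3)[OF finNh] llh by (simp add: nth_eq_iff_index_eq)

lemma Lleaves: "x \<in> tleaves Nh \<Longrightarrow> \<exists>q<m. x = L q"
  using leaf_list_props(1)[OF finNh] llh by (metis in_set_conv_nth)

lemma Lprefix: "q < m \<Longrightarrow> q' < m \<Longrightarrow> prefix (L q) (L q') \<Longrightarrow> q = q'"
  using leaf_no_desc[OF Ih(1) Lin LinNh] Linj by metis

lemma Lpar: "q < m \<Longrightarrow> q' < m \<Longrightarrow> prefix (L q) x \<Longrightarrow> prefix (L q') x \<Longrightarrow> q = q'"
  using Lprefix prefix_same_cases by metis

lemma Lless: "q < q' \<Longrightarrow> q' < m \<Longrightarrow> L q < L q'"
  using leaf_list_props(2)[OF finNh] llh sorted_wrt_nth_less by (metis order.strict_trans)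

lemma Nh_under: "q < m \<Longrightarrow> x \<in> Nh \<Longrightarrow> prefix (L q) x \<Longrightarrow> x = L q"
  using leaf_no_desc[OF Ih(1) Lin] by blast

lemma N_cases: "x \<in> N \<Longrightarrow> x \<in> Nh \<or> (\<exists>q<m. \<exists>w\<in>Nc q. x = L q @ w)"
  using Ndef by auto

lemma N_under: assumes "q < m" shows "L q @ w \<in> N \<longleftrightarrow> w \<in> Nc q"
proof
  assume "w \<in> Nc q" then show "L q @ w \<in> N" using Ndef assms by auto
next
  assume "L q @ w \<in> N"
  then consider "L q @ w \<in> Nh" | q' w' where "q' < m" "w' \<in> Nc q'" "L q @ w = L q' @ w'"
    using N_cases by blast
  then show "w \<in> Nc q"
  proof cases
    case 1
    then have "L q @ w = L q" using Nh_under[OF assms 1] by (simp add: prefix_def)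
    then have "w = []" by simp
    then show ?thesis using Ic(1)[OF assms] by (simp add: treeinv_def)
  next
    case 2
    have "prefix (L q) (L q @ w)" by simp
    moreover have "prefix (L q') (L q @ w)" using 2(3) by simp
    ultimately have "q = q'" using Lpar assms 2 by blast
    with 2 show ?thesis by simp
  qed
qed

lemma tinvN: "treeinv N"
  unfolding treeinv_def
proof (intro conjI allI impI)
  show "finite N" using Ndef finNh Ic(1) by (auto simp: treeinv_def)
  show "[] \<in> N" using Ndef Ih(1) by (auto simp: treeinv_def)
  fix p r assume "p @ r \<in> N"
  then consider "p @ r \<in> Nh" | q w where "q < m" "w \<in> Nc q" "p @ r = L q @ w"
    using N_cases by blast
  then show "p \<in> N"
  proof cases
    case 1 then show ?thesis using Ih(1) Ndef by (auto simp: treeinv_def)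
  next
    case 2
    then obtain us where "p = L q @ us \<and> us @ r = w \<or> p @ us = L q \<and> r = us @ w"
      by (auto simp: append_eq_append_conv2)
    then show ?thesis
    proof
      assume "p = L q @ us \<and> us @ r = w"
      then have "us \<in> Nc q" using Ic(1)[OF 2(1)] 2(2) by (auto simp: treeinv_def)
      then show ?thesis using N_under 2(1) \<open>p = L q @ us \<and> us @ r = w\<close> by auto
    next
      assume "p @ us = L q \<and> r = us @ w"
      then have "p @ us \<in> Nh" using LinNh[OF 2(1)] by simp
      then have "p \<in> Nh" using Ih(1) unfolding treeinv_def by blast
      then show ?thesis using Ndef by auto
    qed
  qed
qed

lemma finN: "finite N" using tinvN by (simp add: treeinv_def)

lemma leavesN: "x \<in> tleaves N \<longleftrightarrow> (\<exists>q<m. \<exists>w\<in>tleaves (Nc q). x = L q @ w)"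
proof
  assume x: "x \<in> tleaves N"
  then have xN: "x \<in> N" "\<forall>c. x @ [c] \<notin> N" by (auto simp: tleaves_def)
  consider "x \<in> Nh" | q w where "q < m" "w \<in> Nc q" "x = L q @ w" using N_cases xN by blast
  then show "\<exists>q<m. \<exists>w\<in>tleaves (Nc q). x = L q @ w"
  proof cases
    case 1
    then have "x \<in> tleaves Nh" using xN Ndef by (auto simp: tleaves_def)
    then obtain q where q: "q < m" "x = L q" using Lleaves by blast
    have "[] \<in> tleaves (Nc q)"
      using Ic(1)[OF q(1)] xN q N_under[OF q(1)] by (auto simp: tleaves_def treeinv_def)
    then show ?thesis using q by (intro exI[of _ q]) (auto intro: bexI[of _ "[]"])
  next
    case 2
    then have "w \<in> tleaves (Nc q)" using xN N_under[OF 2(1)] by (auto simp: tleaves_def)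
    then show ?thesis using 2 by blast
  qed
next
  assume "\<exists>q<m. \<exists>w\<in>tleaves (Nc q). x = L q @ w"
  then obtain q w where q: "q < m" "w \<in> tleaves (Nc q)" "x = L q @ w" by blast
  then have "x \<in> N" using N_under tleaves_sub by blast
  moreover have "x @ [c] \<notin> N" for c using q N_under[OF q(1), of "w @ [c]"] by (auto simp: tleaves_def)
  ultimately show "x \<in> tleaves N" by (simp add: tleaves_def)
qed

lemma leaf_rep_unique: "q < m \<Longrightarrow> q' < m \<Longrightarrow> L q @ w = L q' @ w' \<Longrightarrow> q = q' \<and> w = w'"
proof -
  assume h: "q < m" "q' < m" "L q @ w = L q' @ w'"
  have "prefix (L q) (L q @ w)" by simp
  moreover have "prefix (L q') (L q @ w)" by (simp add: h(3))
  ultimately have "q = q'" using Lpar h by blast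
  with h show ?thesis by simp
qed

lemma leaf_iff: assumes "q < m" shows "L q @ w \<in> tleaves N \<longleftrightarrow> w \<in> tleaves (Nc q)"
  using leavesN leaf_rep_unique assms by metis

definition F :: "nat \<Rightarrow> node list" where "F q = map ((@) (L q)) (leaf_list (Nc q))"

lemma LL: "leaf_list N = concat (map F [0..<m])"
proof (rule leaf_list_eqI[OF finN])
  show "sorted_wrt (<) (concat (map F [0..<m]))"
  proof (rule sorted_wrt_concat_idx)
    show "\<forall>xs\<in>set (map F [0..<m]). sorted_wrt (<) xs"
    proof
      fix xs assume "xs \<in> set (map F [0..<m])"
      then obtain q where q: "q < m" "xs = F q" by auto
      have "sorted_wrt (<) (leaf_list (Nc q))" using leaf_list_props(2) Ic(1)[OF q(1)] by (simp add: treeinv_def)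
      then show "sorted_wrt (<) xs" unfolding q F_def by (simp add: sorted_wrt_map app_less_iff)
    qed
    show "\<forall>i j. i < j \<longrightarrow> j < length (map F [0..<m]) \<longrightarrow>
        (\<forall>x\<in>set (map F [0..<m] ! i). \<forall>y\<in>set (map F [0..<m] ! j). x < y)"
    proof (intro allI impI ballI)
      fix i j x y assume ij: "i < j" "j < length (map F [0..<m])"
        "x \<in> set (map F [0..<m] ! i)" "y \<in> set (map F [0..<m] ! j)"
      then have "j < m" by simp
      with ij obtain w w' where "x = L i @ w" "y = L j @ w'" by (auto simp: F_def)
      moreover have "L i < L j" using Lless ij \<open>j < m\<close> by blast
      moreover have "\<not> prefix (L i) (L j)"
      proof
        assume "prefix (L i) (L j)"
        then have "i = j" using Lprefix ij \<open>j < m\<close> by (meson order.strict_trans)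
        with ij show False by simp
      qed
      ultimately show "x < y" using incomparable_less by blast
    qed
  qed
  show "set (concat (map F [0..<m])) = tleaves N"
  proof -
    have "set (concat (map F [0..<m])) = (\<Union>q<m. (\<lambda>w. L q @ w) ` tleaves (Nc q))"
      using leaf_list_props(1) Ic(1) by (auto simp: F_def treeinv_def)
    also have "\<dots> = tleaves N" using leavesN by blast
    finally show ?thesis .
  qed
qed

end

lemma tleaves_single: "tleaves {[]} = {[]}" by (auto simp: tleaves_def)
lemma leaf_list_single: "leaf_list {[]} = [[]]" unfolding leaf_list_def tleaves_single by simp

context SP begin

lemma lenc: "q < m \<Longrightarrow> length (leaf_list (Nc q)) = length (Ss!q)"
  using Ic(4) by simp

lemma zipfact: assumes "q < m" "j < length (Ss!q)"
  shows "B (L q @ leaf_list (Nc q) ! j) = Some (Ss!q!j)"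
proof -
  have "\<exists>i<length (concat (map F [0..<m])). concat (map F [0..<m]) ! i = map F [0..<m] ! q ! j \<and> concat Ss ! i = Ss ! q ! j"
  proof (rule concat_nth_pair)
    show "length (map F [0..<m]) = length Ss" by simp
    show "\<forall>k<length (map F [0..<m]). length (map F [0..<m] ! k) = length (Ss ! k)"
      using lenc by (simp add: F_def)
    show "q < length (map F [0..<m])" using assms by simp
    show "j < length (map F [0..<m] ! q)" using assms lenc by (simp add: F_def)
  qed
  then obtain i where i: "i < length (leaf_list N)" "leaf_list N ! i = L q @ leaf_list (Nc q) ! j" "S ! i = Ss!q!j"
    using LL cc assms lenc by (auto simp: F_def)
  then show ?thesis using Bleaf lln by metis
qed

lemma cblock: assumes "q < m" "w \<in> tleaves (Nc q)"
  shows "\<exists>j<length (Ss!q). w = leaf_list (Nc q) ! j \<and> B (L q @ w) = Some (Ss!q!j) \<and>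
           Bc q w = Some (filter (\<lambda>a. \<not> glob a) (Ss!q!j))"
proof -
  have "w \<in> set (leaf_list (Nc q))" using leaf_list_props(1) Ic(1)[OF assms(1)] assms(2) by (simp add: treeinv_def)
  then obtain j where j: "j < length (leaf_list (Nc q))" "w = leaf_list (Nc q) ! j" by (auto simp: in_set_conv_nth)
  then have j2: "j < length (Ss!q)" using lenc assms by simp
  have "Bc q w = Some (Sc q ! j)" using Ic(5)[OF assms(1)] j j2 by simp
  then show ?thesis using zipfact[OF assms(1) j2] j j2 by auto
qed

lemma UN_nth: "(\<Union>q<length xs. f (xs!q)) = (\<Union>x\<in>set xs. f x)"
proof
  show "(\<Union>q<length xs. f (xs!q)) \<subseteq> (\<Union>x\<in>set xs. f x)" using nth_mem by fastforce
  show "(\<Union>x\<in>set xs. f x) \<subseteq> (\<Union>q<length xs. f (xs!q))"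
  proof
    fix y assume "y \<in> (\<Union>x\<in>set xs. f x)"
    then obtain x where "x \<in> set xs" "y \<in> f x" by blast
    then obtain q where "q < length xs" "xs!q = x" by (meson in_set_conv_nth)
    then show "y \<in> (\<Union>q<length xs. f (xs!q))" using \<open>y \<in> f x\<close> by blast
  qed
qed

lemma symsS: "syms S = (\<Union>q<m. syms (Ss!q))"
  unfolding UN_nth unfolding syms_def cc[symmetric] by simp

lemma blk_sym: "q < m \<Longrightarrow> j < length (Ss!q) \<Longrightarrow> a \<in> set (Ss!q!j) \<Longrightarrow> a \<in> syms (Ss!q)"
proof -
  assume "j < length (Ss!q)" "a \<in> set (Ss!q!j)"
  moreover have "Ss!q!j \<in> set (Ss!q)" using \<open>j < length (Ss!q)\<close> by (rule nth_mem)
  ultimately show ?thesis unfolding syms_def by auto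
qed

lemma loc_unique: "\<not> glob a \<Longrightarrow> q < m \<Longrightarrow> q' < m \<Longrightarrow> a \<in> syms (Ss!q) \<Longrightarrow> a \<in> syms (Ss!q') \<Longrightarrow> q = q'"
  unfolding is_global_def by blast

lemma glob_Sh: "glob a \<Longrightarrow> q < m \<Longrightarrow> a \<in> syms (Ss!q) \<Longrightarrow> a \<in> set (Sh!q)"
  using shq by blast

lemma Sh_glob: "q < length Sh \<Longrightarrow> a \<in> set (Sh!q) \<Longrightarrow> glob a \<and> a \<in> syms (Ss!q)"
  using shq lsh by auto

lemma symsSh: "a \<in> syms Sh \<Longrightarrow> glob a"
proof -
  assume "a \<in> syms Sh"
  then obtain x where "x \<in> set Sh" "a \<in> set x" unfolding syms_def by auto
  then obtain q where "q < length Sh" "Sh!q = x" by (meson in_set_conv_nth)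
  then show ?thesis using Sh_glob \<open>a \<in> set x\<close> by blast
qed

lemma symsSc: "q < m \<Longrightarrow> a \<in> syms (Sc q) \<Longrightarrow> \<not> glob a \<and> a \<in> syms (Ss!q)"
  unfolding syms_def by auto

lemma glob_symsS: "glob a \<Longrightarrow> a \<in> syms S"
  unfolding is_global_def symsS by blast

lemma glob_symsSh: "glob a \<Longrightarrow> a \<in> syms Sh"
proof -
  assume g: "glob a"
  then obtain q where q: "q < m" "a \<in> syms (Ss!q)" unfolding is_global_def by blast
  then have "a \<in> set (Sh!q)" using glob_Sh g by blast
  moreover have "Sh!q \<in> set Sh" using q lsh by simp
  ultimately show ?thesis unfolding syms_def by auto
qed

lemma loc_symsSc: "\<not> glob a \<Longrightarrow> q < m \<Longrightarrow> a \<in> syms (Ss!q) \<Longrightarrow> a \<in> syms (Sc q)"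
  unfolding syms_def by auto

lemma BLq: "q < m \<Longrightarrow> L q \<notin> tleaves N \<Longrightarrow> B (L q) = Some (Sh!q)"
  using BBh LinNh Ih(5) lsh by auto

lemma single_Nc: assumes "q < m" "[] \<in> tleaves (Nc q)" shows "Nc q = {[]}"
proof -
  have t: "treeinv (Nc q)" using Ic(1)[OF assms(1)] .
  { fix w assume "w \<in> Nc q" "w \<noteq> []"
    then obtain c r where "w = [c] @ r" by (cases w) auto
    then have "[c] \<in> Nc q" using t \<open>w \<in> Nc q\<close> unfolding treeinv_def by blast
    with assms(2) have False by (auto simp: tleaves_def) }
  moreover have "[] \<in> Nc q" using t by (simp add: treeinv_def)
  ultimately show ?thesis by blast
qed

lemma Ch: assumes "glob s" "x \<in> Nh" shows "inblk N B s x \<longleftrightarrow> inblk Nh Bh s x"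
proof (cases "x \<in> tleaves N")
  case False
  then show ?thesis using BBh assms(2) Ndef by (auto simp: inblk_def)
next
  case True
  then obtain q w where q: "q < m" "w \<in> tleaves (Nc q)" "x = L q @ w" using leavesN by blast
  have "prefix (L q) x" using q(3) by simp
  then have "x = L q" using Nh_under[OF q(1) assms(2)] by blast
  then have w: "w = []" using q by simp
  then have nc: "Nc q = {[]}" using single_Nc q by blast
  then have l1: "length (Ss!q) = 1" using lenc[OF q(1)] leaf_list_single by simp
  then have sq: "Ss!q = [Ss!q!0]" by (cases "Ss!q") auto
  obtain j where j: "j < length (Ss!q)" "B (L q @ w) = Some (Ss!q!j)" using cblock q by blast
  then have j0: "j = 0" using l1 by simp
  have "Bh (L q) = Some (Sh!q)" using Ih(5) lsh q by simp
  moreover have "s \<in> set (Sh!q) \<longleftrightarrow> s \<in> set (Ss!q!0)"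
    using shq q assms(1) sq by (metis (no_types, lifting) concat.simps list.simps(15) mem_Collect_eq
          self_append_conv syms_def concat.simps(1))
  ultimately show ?thesis using j j0 w \<open>x = L q\<close> assms(2) Ndef by (auto simp: inblk_def)
qed

lemma Cg: assumes "glob s" "q < m" "w \<in> Nc q" "w \<noteq> []" "w \<notin> tleaves (Nc q)"
  shows "\<not> inblk N B s (L q @ w)"
proof
  assume "inblk N B s (L q @ w)"
  then obtain \<beta> where b: "B (L q @ w) = Some \<beta>" "s \<in> set \<beta>" by (auto simp: inblk_def)
  have "L q @ w \<notin> tleaves N" using leaf_iff assms by blast
  then have "B (L q @ w) = Bc q w" using BBc assms by blast
  then have "set \<beta> \<subseteq> syms (Sc q)" using Ic(3)[OF assms(2)] b by auto
  then show False using symsSc assms b by blast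
qed

lemma Cleaf: assumes "glob s" "q < m" "w \<in> tleaves (Nc q)" "inblk N B s (L q @ w)"
  shows "inblk Nh Bh s (L q)"
proof -
  obtain j where j: "j < length (Ss!q)" "B (L q @ w) = Some (Ss!q!j)" using cblock assms by blast
  then have "s \<in> set (Ss!q!j)" using assms(4) by (auto simp: inblk_def)
  then have "s \<in> set (Sh!q)" using blk_sym glob_Sh assms j by blast
  then show ?thesis using Ih(5) lsh assms LinNh by (auto simp: inblk_def)
qed

lemma Cc: assumes "\<not> glob s" "q < m"
  shows "inblk N B s (L q @ w) \<longleftrightarrow> inblk (Nc q) (Bc q) s w"
proof (cases "w \<in> Nc q")
  case False
  then show ?thesis using N_under[OF assms(2)] by (auto simp: inblk_def)
next
  case w: True
  show ?thesis
  proof (cases "w \<in> tleaves (Nc q)")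
    case True
    then obtain j where j: "j < length (Ss!q)" "B (L q @ w) = Some (Ss!q!j)"
        "Bc q w = Some (filter (\<lambda>a. \<not> glob a) (Ss!q!j))" using cblock assms by blast
    then show ?thesis using w assms N_under by (auto simp: inblk_def)
  next
    case nl: False
    show ?thesis
    proof (cases "w = []")
      case False
      have "L q @ w \<notin> tleaves N" using leaf_iff assms nl by blast
      then have "B (L q @ w) = Bc q w" using BBc assms w False by blast
      then show ?thesis using w N_under assms by (auto simp: inblk_def)
    next
      case True
      have "L q \<notin> tleaves N" using leaf_iff[OF assms(2), of "[]"] nl True by simp
      then have "B (L q) = Some (Sh!q)" using BLq assms by blast
      then have "\<not> inblk N B s (L q)" using Sh_glob lsh assms by (auto simp: inblk_def)
      moreover have "\<not> inblk (Nc q) (Bc q) s []"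
      proof
        assume "inblk (Nc q) (Bc q) s []"
        then have "prefix (crc q s @ [0]) [] \<or> prefix (crc q s @ [1]) []" using Ic(7)[OF assms(2)] by blast
        then show False by simp
      qed
      ultimately show ?thesis using True by simp
    qed
  qed
qed

lemma Cloc: assumes "\<not> glob s" "inblk N B s x"
  shows "\<exists>q<m. \<exists>w. x = L q @ w \<and> inblk (Nc q) (Bc q) s w \<and> s \<in> syms (Ss!q)"
proof -
  have xN: "x \<in> N" using assms(2) by (simp add: inblk_def)
  have "\<exists>q<m. \<exists>w. x = L q @ w"
  proof (cases "x \<in> Nh")
    case True
    show ?thesis
    proof (cases "x \<in> tleaves N")
      case True then show ?thesis using leavesN by blast
    next
      case False
      then have "B x = Bh x" using BBh \<open>x \<in> Nh\<close> by blast
      then obtain \<beta> where "Bh x = Some \<beta>" "s \<in> set \<beta>" using assms(2) by (auto simp: inblk_def)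
      then have "s \<in> syms Sh" using Ih(3) by blast
      then show ?thesis using symsSh assms(1) by blast
    qed
  next
    case False then show ?thesis using N_cases xN by blast
  qed
  then obtain q w where q: "q < m" "x = L q @ w" by blast
  then have "inblk (Nc q) (Bc q) s w" using Cc assms by blast
  moreover then have "s \<in> syms (Sc q)" using Ic(3)[OF q(1)] by (auto simp: inblk_def)
  ultimately show ?thesis using q symsSc by blast
qed

lemma Cglob: assumes "glob s" "inblk N B s x"
  shows "x \<in> Nh \<or> (\<exists>q<m. \<exists>w\<in>tleaves (Nc q). w \<noteq> [] \<and> x = L q @ w)"
proof -
  have xN: "x \<in> N" using assms(2) by (simp add: inblk_def)
  show ?thesis
  proof (cases "x \<in> Nh")
    case False
    then obtain q w where q: "q < m" "w \<in> Nc q" "x = L q @ w" using N_cases xN by blast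
    then have "w \<noteq> []" using False LinNh by auto
    moreover then have "w \<in> tleaves (Nc q)" using Cg assms q by blast
    ultimately show ?thesis using q by blast
  qed simp
qed

end

lemma prefix_app_cases: "prefix x (u @ w) \<Longrightarrow> prefix x u \<or> (\<exists>x'. x = u @ x' \<and> x' \<noteq> [] \<and> prefix x' w)"
proof -
  assume "prefix x (u @ w)"
  then have "prefix x u \<or> (\<exists>us. x = u @ us \<and> prefix us w)" by (simp add: prefix_append)
  then show ?thesis
  proof (elim disjE exE)
    assume "prefix x u" then show ?thesis by blast
  next
    fix us assume h: "x = u @ us \<and> prefix us w"
    show ?thesis
    proof (cases "us = []")
      case True then show ?thesis using h by simp
    next
      case False then show ?thesis using h by blast
    qed
  qed
qed

lemma strict_prefix_app: "strict_prefix (u @ x) (u @ y) \<longleftrightarrow> strict_prefix x y"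
  by (auto simp: strict_prefix_def)

context SP begin

lemma inblk_syms: "inblk N B a p \<Longrightarrow> a \<in> syms S"
proof -
  assume h: "inblk N B a p"
  then obtain \<beta> where b: "B p = Some \<beta>" "a \<in> set \<beta>" by (auto simp: inblk_def)
  have pN: "p \<in> N" using h by (simp add: inblk_def)
  show ?thesis
  proof (cases "p \<in> tleaves N")
    case True
    then obtain i where "i < length (leaf_list N)" "p = leaf_list N ! i"
      using leaf_list_props(1)[OF finN] by (metis in_set_conv_nth)
    then have "B p = Some (S!i)" "i < length S" using Bleaf lln by auto
    then show ?thesis using b unfolding syms_def by (auto dest: nth_mem)
  next
    case False
    show ?thesis
    proof (cases "p \<in> Nh")
      case True
      then have "Bh p = Some \<beta>" using BBh False b by auto
      then have "a \<in> syms Sh" using Ih(3) b by blast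
      then show ?thesis using symsSh glob_symsS by blast
    next
      case nh: False
      then obtain q w where q: "q < m" "w \<in> Nc q" "p = L q @ w" using N_cases pN by blast
      then have "w \<noteq> []" using nh LinNh by auto
      then have "Bc q w = Some \<beta>" using BBc q False b by auto
      then have "a \<in> syms (Sc q)" using Ic(3)[OF q(1)] b by blast
      then show ?thesis using symsSc q symsS by blast
    qed
  qed
qed

lemma Pglob: assumes "glob s" "q < m" "w \<in> tleaves (Nc q)" "inblk N B s (L q @ w)" "prefix x (L q @ w)"
  shows "inblk N B s x \<longleftrightarrow> (if prefix x (L q) then inblk Nh Bh s x else x = L q @ w)"
proof (cases "prefix x (L q)")
  case True
  then have "x \<in> Nh" using treeinv_prefix[OF Ih(1) LinNh[OF assms(2)]] by blast
  then show ?thesis using Ch assms True by simp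
next
  case False
  then obtain x' where x': "x = L q @ x'" "x' \<noteq> []" "prefix x' w" using prefix_app_cases assms(5) by blast
  show ?thesis
  proof (cases "x' = w")
    case True then show ?thesis using False assms x' by simp
  next
    case ne: False
    have wN: "w \<in> Nc q" using assms(3) tleaves_sub by blast
    have "x' \<in> Nc q" using treeinv_prefix[OF Ic(1)[OF assms(2)] wN x'(3)] .
    moreover have "x' \<notin> tleaves (Nc q)" using leaf_no_desc[OF Ic(1)[OF assms(2)] _ wN x'(3)] ne by blast
    ultimately have "\<not> inblk N B s x" using Cg assms x' by blast
    then show ?thesis using False x' ne by simp
  qed
qed

lemma LB_loc: assumes "\<not> glob a" "\<not> glob b" "q < m" "a \<in> syms (Ss!q)" "b \<in> syms (Ss!q)"
    "LB (Nc q) (Bc q) (crc q) a b w"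
  shows "LB N B cr a b (L q @ w)"
proof -
  have ca: "cr a = L q @ crc q a" and cb: "cr b = L q @ crc q b" using crl assms by auto
  obtain p g where pg: "strict_prefix p g" "prefix g w" "inblk (Nc q) (Bc q) a p"
     "prefix p (crc q b)" "strict_prefix (crc q b) g"
     "\<forall>x. strict_prefix p x \<longrightarrow> strict_prefix x g \<longrightarrow> \<not> inblk (Nc q) (Bc q) a x"
     "\<forall>x. prefix g x \<longrightarrow> prefix x w \<longrightarrow> (inblk (Nc q) (Bc q) a x \<longleftrightarrow> inblk (Nc q) (Bc q) b x)"
    using assms(6) unfolding LB_def by blast
  show ?thesis unfolding LB_def
  proof (rule exI[of _ "L q @ p"], rule exI[of _ "L q @ g"], intro conjI allI impI)
    show "strict_prefix (L q @ p) (L q @ g)" using pg(1) strict_prefix_app by blast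
    show "prefix (L q @ g) (L q @ w)" using pg(2) by simp
    show "inblk N B a (L q @ p)" using pg(3) Cc assms by blast
    show "prefix (L q @ p) (cr b)" using pg(4) cb by simp
    show "strict_prefix (cr b) (L q @ g)" using pg(5) cb strict_prefix_app by metis
  next
    fix x assume h: "strict_prefix (L q @ p) x" "strict_prefix x (L q @ g)"
    then obtain x' where "x = L q @ x'" by (auto simp: strict_prefix_def prefix_def)
    then show "\<not> inblk N B a x" using h pg(6) Cc assms strict_prefix_app by metis
  next
    fix x assume h: "prefix (L q @ g) x" "prefix x (L q @ w)"
    then obtain x' where x': "x = L q @ x'" by (auto simp: prefix_def)
    then have "prefix g x'" "prefix x' w" using h by auto
    then show "inblk N B a x \<longleftrightarrow> inblk N B b x" using pg(7) Cc assms x' by metis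
  qed
qed

lemma LAM_loc: assumes "\<not> glob a" "\<not> glob b" "q < m" "a \<in> syms (Ss!q)" "b \<in> syms (Ss!q)"
    "LAM (Nc q) (Bc q) (crc q) a b w"
  shows "LAM N B cr a b (L q @ w)"
proof -
  have ca: "cr a = L q @ crc q a" and cb: "cr b = L q @ crc q b" using crl assms by auto
  consider "LA (Nc q) (Bc q) (crc q) a b w" | "LB (Nc q) (Bc q) (crc q) a b w" | "LB (Nc q) (Bc q) (crc q) b a w"
    using assms(6) unfolding LAM_def by blast
  then show ?thesis
  proof cases
    case 1
    have "LA N B cr a b (L q @ w)" unfolding LA_def
    proof (intro conjI allI impI)
      show "cr a = cr b" using 1 ca cb by (simp add: LA_def)
      fix x assume h: "prefix x (L q @ w)" "strict_prefix (cr a) x"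
      then obtain x' where x': "x = L q @ x'" using ca by (auto simp: strict_prefix_def prefix_def)
      then have "prefix x' w" "strict_prefix (crc q a) x'" using h ca strict_prefix_app by auto
      then show "inblk N B a x \<longleftrightarrow> inblk N B b x" using 1 Cc assms x' unfolding LA_def by metis
    qed
    then show ?thesis by (simp add: LAM_def)
  next
    case 2 then show ?thesis using LB_loc assms by (simp add: LAM_def)
  next
    case 3 then show ?thesis using LB_loc assms by (simp add: LAM_def)
  qed
qed

lemma LAM_glob: assumes "glob a" "glob b" "q < m" "w \<in> tleaves (Nc q)"
    "inblk N B a (L q @ w)" "inblk N B b (L q @ w)" "LAM Nh Bh crh a b (L q)"
  shows "LAM N B cr a b (L q @ w)"
proof -
  have ca: "cr a = crh a" and cb: "cr b = crh b" using crg assms glob_symsS by auto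
  have P: "inblk N B s x \<longleftrightarrow> (if prefix x (L q) then inblk Nh Bh s x else x = L q @ w)"
    if "s = a \<or> s = b" "prefix x (L q @ w)" for s x
    using Pglob that assms by blast
  have LBg: "LB N B cr x y (L q @ w)" if xy: "x = a \<and> y = b \<or> x = b \<and> y = a" "LB Nh Bh crh x y (L q)" for x y
  proof -
    have cy: "cr y = crh y" using xy ca cb by auto
    obtain p g where pg: "strict_prefix p g" "prefix g (L q)" "inblk Nh Bh x p"
     "prefix p (crh y)" "strict_prefix (crh y) g"
     "\<forall>z. strict_prefix p z \<longrightarrow> strict_prefix z g \<longrightarrow> \<not> inblk Nh Bh x z"
     "\<forall>z. prefix g z \<longrightarrow> prefix z (L q) \<longrightarrow> (inblk Nh Bh x z \<longleftrightarrow> inblk Nh Bh y z)"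
      using xy(2) unfolding LB_def by blast
    have gv: "prefix g (L q @ w)" using pg(2) prefix_prefix by blast
    show ?thesis unfolding LB_def
    proof (rule exI[of _ p], rule exI[of _ g], intro conjI allI impI)
      show "strict_prefix p g" "prefix g (L q @ w)" using pg(1) gv by auto
      have "prefix p (L q)" using pg(1,2) by (meson prefix_order.dual_order.trans strict_prefix_def)
      then show "inblk N B x p" using P[of x p] xy pg(3) gv \<open>prefix p (L q)\<close> prefix_prefix by auto
      show "prefix p (cr y)" "strict_prefix (cr y) g" using pg cy by auto
    next
      fix z assume h: "strict_prefix p z" "strict_prefix z g"
      then have "prefix z (L q)" using pg(2) by (meson prefix_order.dual_order.trans strict_prefix_def)
      then show "\<not> inblk N B x z" using P[of x z] xy pg(6) h prefix_prefix by auto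
    next
      fix z assume h: "prefix g z" "prefix z (L q @ w)"
      show "inblk N B x z \<longleftrightarrow> inblk N B y z"
      proof (cases "prefix z (L q)")
        case True then show ?thesis using P[of x z] P[of y z] xy pg(7) h by auto
      next
        case False then show ?thesis using P[of x z] P[of y z] xy h by auto
      qed
    qed
  qed
  consider "LA Nh Bh crh a b (L q)" | "LB Nh Bh crh a b (L q)" | "LB Nh Bh crh b a (L q)"
    using assms(7) unfolding LAM_def by blast
  then show ?thesis
  proof cases
    case 1
    have "LA N B cr a b (L q @ w)" unfolding LA_def
    proof (intro conjI allI impI)
      show "cr a = cr b" using 1 ca cb by (simp add: LA_def)
      fix x assume h: "prefix x (L q @ w)" "strict_prefix (cr a) x"
      show "inblk N B a x \<longleftrightarrow> inblk N B b x"
      proof (cases "prefix x (L q)")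
        case True then show ?thesis using P[of a x] P[of b x] 1 h ca unfolding LA_def by auto
      next
        case False then show ?thesis using P[of a x] P[of b x] h by auto
      qed
    qed
    then show ?thesis by (simp add: LAM_def)
  next
    case 2 then show ?thesis using LBg by (simp add: LAM_def)
  next
    case 3 then show ?thesis using LBg by (simp add: LAM_def)
  qed
qed

lemma LB_mix: assumes "glob a" "\<not> glob b" "q < m" "w \<in> tleaves (Nc q)"
    "inblk N B a (L q @ w)" "inblk N B b (L q @ w)"
  shows "LB N B cr a b (L q @ w)"
proof -
  have ib: "inblk (Nc q) (Bc q) b w" using Cc assms by blast
  then have "prefix (crc q b @ [0]) w \<or> prefix (crc q b @ [1]) w" using Ic(7)[OF assms(3)] by blast
  then have sp: "strict_prefix (crc q b) w" by (auto simp: strict_prefix_def prefix_def)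
  then have wne: "w \<noteq> []" by auto
  have "b \<in> syms (Sc q)" using ib Ic(3)[OF assms(3)] by (auto simp: inblk_def)
  then have "b \<in> syms (Ss!q)" using symsSc assms by blast
  then have cb: "cr b = L q @ crc q b" using crl assms by blast
  have ia: "inblk N B a (L q)" using Cleaf assms Ch LinNh by blast
  show ?thesis unfolding LB_def
  proof (rule exI[of _ "L q"], rule exI[of _ "L q @ w"], intro conjI allI impI)
    show "strict_prefix (L q) (L q @ w)" using wne by (simp add: strict_prefix_def)
    show "prefix (L q @ w) (L q @ w)" by simp
    show "inblk N B a (L q)" by (rule ia)
    show "prefix (L q) (cr b)" using cb by simp
    show "strict_prefix (cr b) (L q @ w)" using cb sp strict_prefix_app by metis
  next
    fix x assume h: "strict_prefix (L q) x" "strict_prefix x (L q @ w)"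
    then have "prefix x (L q @ w)" "\<not> prefix x (L q)" "x \<noteq> L q @ w"
      by (auto simp: strict_prefix_def)
    then show "\<not> inblk N B a x" using Pglob assms by auto
  next
    fix x assume "prefix (L q @ w) x" "prefix x (L q @ w)"
    then have "x = L q @ w" by auto
    then show "inblk N B a x \<longleftrightarrow> inblk N B b x" using assms by simp
  qed
qed

end

context SP begin

lemma INV_N: "INV S N B cr lhe rhe"
  unfolding INV_def
proof (intro conjI allI impI ballI)
  show "treeinv N" by (rule tinvN)
next
  fix p assume "B p \<noteq> None" then show "p \<in> N" using Bnone by metis
next
  fix p \<beta> assume h: "B p = Some \<beta>"
  show "set \<beta> \<subseteq> syms S"
  proof
    fix a assume "a \<in> set \<beta>"
    moreover have "p \<in> N"
    proof (rule ccontr)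
      assume "p \<notin> N" then have "B p = None" using Bnone by blast
      with h show False by simp
    qed
    ultimately have "inblk N B a p" using h by (simp add: inblk_def)
    then show "a \<in> syms S" by (rule inblk_syms)
  qed
next
  show "length (leaf_list N) = length S" by (rule lln)
next
  fix i assume "i < length S" then show "B (leaf_list N ! i) = Some (S!i)" using Bleaf by blast
next
  fix a assume aS: "a \<in> syms S"
  have "lhe a = cr a @ [0] \<and> rhe a = cr a @ [1] \<and> inblk N B a (lhe a) \<and> inblk N B a (rhe a)"
  proof (cases "glob a")
    case True
    then have c: "cr a = crh a" "lhe a = lheh a" "rhe a = rheh a" using crg aS by auto
    have ash: "a \<in> syms Sh" using glob_symsSh True by blast
    then have h: "lheh a = crh a @ [0]" "rheh a = crh a @ [1]" "inblk Nh Bh a (lheh a)" "inblk Nh Bh a (rheh a)"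
      using Ih(6) by auto
    then have "lheh a \<in> Nh" "rheh a \<in> Nh" by (auto simp: inblk_def)
    then show ?thesis using h c Ch True by simp
  next
    case False
    obtain q where q: "q < m" "a \<in> syms (Ss!q)" using aS symsS by blast
    then have c: "cr a = L q @ crc q a" "lhe a = L q @ lhec q a" "rhe a = L q @ rhec q a" using crl False by auto
    have "a \<in> syms (Sc q)" using loc_symsSc False q by blast
    then have h: "lhec q a = crc q a @ [0]" "rhec q a = crc q a @ [1]"
      "inblk (Nc q) (Bc q) a (lhec q a)" "inblk (Nc q) (Bc q) a (rhec q a)"
      using Ic(6)[OF q(1)] by auto
    then show ?thesis using c Cc False q by simp
  qed
  then show "lhe a = cr a @ [0]" "rhe a = cr a @ [1]" "inblk N B a (lhe a)" "inblk N B a (rhe a)" by auto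
next
  fix a p assume ip: "inblk N B a p"
  have aS: "a \<in> syms S" using inblk_syms ip .
  show "prefix (cr a @ [0]) p \<or> prefix (cr a @ [1]) p"
  proof (cases "glob a")
    case True
    then have c: "cr a = crh a" using crg aS by auto
    consider "p \<in> Nh" | q w where "q < m" "w \<in> tleaves (Nc q)" "w \<noteq> []" "p = L q @ w"
      using Cglob True ip by blast
    then show ?thesis
    proof cases
      case 1
      then have "inblk Nh Bh a p" using Ch True ip by blast
      then have "prefix (crh a @ [0]) p \<or> prefix (crh a @ [1]) p" using Ih(7) by blast
      then show ?thesis using c by simp
    next
      case 2
      then have "inblk Nh Bh a (L q)" using Cleaf True ip by blast
      then have "prefix (crh a @ [0]) (L q) \<or> prefix (crh a @ [1]) (L q)" using Ih(7) by blast
      then have "prefix (crh a @ [0]) p \<or> prefix (crh a @ [1]) p" using 2 prefix_prefix by blast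
      then show ?thesis using c by simp
    qed
  next
    case False
    then obtain q w where q: "q < m" "p = L q @ w" "inblk (Nc q) (Bc q) a w" "a \<in> syms (Ss!q)"
      using Cloc ip by blast
    then have c: "cr a = L q @ crc q a" using crl False by auto
    have "prefix (crc q a @ [0]) w \<or> prefix (crc q a @ [1]) w" using Ic(7)[OF q(1)] q by blast
    then show ?thesis using c q by auto
  qed
next
  fix a p assume ip: "inblk N B a p"
  show "\<exists>l\<in>tleaves N. prefix p l \<and> inblk N B a l"
  proof (cases "glob a")
    case True
    consider "p \<in> Nh" | q w where "q < m" "w \<in> tleaves (Nc q)" "w \<noteq> []" "p = L q @ w"
      using Cglob True ip by blast
    then show ?thesis
    proof cases
      case 1
      then have "inblk Nh Bh a p" using Ch True ip by blast
      then obtain l where l: "l \<in> tleaves Nh" "prefix p l" "inblk Nh Bh a l" using Ih(8) by blast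
      then obtain q where q: "q < m" "l = L q" using Lleaves by blast
      have "Bh (L q) = Some (Sh!q)" using Ih(5) lsh q by simp
      then have "a \<in> set (Sh!q)" using l q by (auto simp: inblk_def)
      then have "a \<in> syms (Ss!q)" using Sh_glob lsh q by auto
      then obtain x where x: "x \<in> set (Ss!q)" "a \<in> set x" unfolding syms_def by auto
      then obtain j where j: "j < length (Ss!q)" "Ss!q!j = x" by (meson in_set_conv_nth)
      let ?l = "L q @ leaf_list (Nc q) ! j"
      have "leaf_list (Nc q) ! j \<in> tleaves (Nc q)"
      proof -
        have "finite (Nc q)" using Ic(1)[OF q(1)] by (simp add: treeinv_def)
        moreover have "leaf_list (Nc q) ! j \<in> set (leaf_list (Nc q))" using j lenc[OF q(1)] by simp
        ultimately show ?thesis using leaf_list_props(1) by blast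
      qed
      then have "?l \<in> tleaves N" using leaf_iff q by blast
      moreover have "inblk N B a ?l" using zipfact[OF q(1) j(1)] j x \<open>?l \<in> tleaves N\<close> tleaves_sub
        by (auto simp: inblk_def)
      moreover have "prefix p ?l" using l q prefix_prefix by blast
      ultimately show ?thesis by blast
    next
      case 2
      then have "p \<in> tleaves N" using leaf_iff by blast
      then show ?thesis using ip by blast
    qed
  next
    case False
    then obtain q w where q: "q < m" "p = L q @ w" "inblk (Nc q) (Bc q) a w" "a \<in> syms (Ss!q)"
      using Cloc ip by blast
    then obtain l where l: "l \<in> tleaves (Nc q)" "prefix w l" "inblk (Nc q) (Bc q) a l" using Ic(8)[OF q(1)] by blast
    then have "L q @ l \<in> tleaves N" "inblk N B a (L q @ l)" using leaf_iff Cc q False by blast+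
    moreover have "prefix p (L q @ l)" using l q by simp
    ultimately show ?thesis by blast
  qed
next
  fix a b v assume h: "v \<in> tleaves N" "a \<noteq> b" "inblk N B a v" "inblk N B b v"
  then obtain q w where q: "q < m" "w \<in> tleaves (Nc q)" "v = L q @ w" using leavesN by blast
  show "LAM N B cr a b v"
  proof (cases "glob a")
    case ga: True
    show ?thesis
    proof (cases "glob b")
      case True
      have "inblk Nh Bh a (L q)" "inblk Nh Bh b (L q)" using Cleaf ga True q h by blast+
      then have "LAM Nh Bh crh a b (L q)" using Ih(9) Lin q h(2) by blast
      then show ?thesis using LAM_glob ga True q h by blast
    next
      case False
      then show ?thesis using LB_mix ga q h unfolding LAM_def by blast
    qed
  next
    case na: False
    show ?thesis
    proof (cases "glob b")
      case True
      then show ?thesis using LB_mix na q h unfolding LAM_def by blast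
    next
      case False
      have ia: "inblk (Nc q) (Bc q) a w" "inblk (Nc q) (Bc q) b w" using Cc na False q h by blast+
      then have "a \<in> syms (Sc q)" "b \<in> syms (Sc q)" using Ic(3)[OF q(1)] by (auto simp: inblk_def)
      then have "a \<in> syms (Ss!q)" "b \<in> syms (Ss!q)" using symsSc q by blast+
      moreover have "LAM (Nc q) (Bc q) (crc q) a b w" using Ic(9)[OF q(1)] ia q h(2) by blast
      ultimately show ?thesis using LAM_loc na False q by blast
    qed
  qed
qed

end

lemma deriv_INV: "deriv S N B cr lhe rhe \<Longrightarrow> INV S N B cr lhe rhe"
proof (induction rule: deriv.induct)
  case (one \<beta> cr lhe rhe)
  then show ?case by (rule INV_one)
next
  case (two \<beta>1 \<beta>2 cr lhe rhe)
  then show ?case by (rule INV_two)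
next
  case (split S Ss Sh Nh Bh crh lheh rheh Nc Bc crc lhec rhec N B cr lhe rhe)
  interpret SP S Ss Sh Nh Bh crh lheh rheh Nc Bc crc lhec rhec N B cr lhe rhe
    by (unfold_locales) (use split in auto)
  show ?case by (rule INV_N)
qed


locale FT =
  fixes S :: "'a list list" and N :: "node set" and B :: "node \<Rightarrow> 'a list option"
    and cr lhe rhe :: "'a \<Rightarrow> node"
  assumes inv: "INV S N B cr lhe rhe"
begin

lemma I: "treeinv N" "\<forall>p. B p \<noteq> None \<longrightarrow> p \<in> N" "\<forall>p \<beta>. B p = Some \<beta> \<longrightarrow> set \<beta> \<subseteq> syms S"
  "length (leaf_list N) = length S" "\<forall>i<length S. B (leaf_list N ! i) = Some (S!i)"
  "\<forall>a\<in>syms S. lhe a = cr a @ [0] \<and> rhe a = cr a @ [1] \<and> inblk N B a (lhe a) \<and> inblk N B a (rhe a)"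
  "\<forall>a p. inblk N B a p \<longrightarrow> prefix (cr a @ [0]) p \<or> prefix (cr a @ [1]) p"
  "\<forall>a p. inblk N B a p \<longrightarrow> (\<exists>l\<in>tleaves N. prefix p l \<and> inblk N B a l)"
  "\<forall>a b v. v \<in> tleaves N \<longrightarrow> a \<noteq> b \<longrightarrow> inblk N B a v \<longrightarrow> inblk N B b v \<longrightarrow> LAM N B cr a b v"
  using inv unfolding INV_def by blast+

lemma finN: "finite N" using I(1) by (simp add: treeinv_def)

abbreviation "R s \<equiv> rnodes N B cr s"

lemma inblk_N: "inblk N B s p \<Longrightarrow> p \<in> N" by (simp add: inblk_def)

lemma inblk_syms: "inblk N B s p \<Longrightarrow> s \<in> syms S"
  using I(3) by (auto simp: inblk_def)

lemma below_crown: "inblk N B s p \<Longrightarrow> strict_prefix (cr s) p"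
proof -
  assume "inblk N B s p"
  then have "prefix (cr s @ [0]) p \<or> prefix (cr s @ [1]) p" using I(7) by blast
  then show ?thesis by (auto simp: strict_prefix_def prefix_def)
qed

lemma heads: "s \<in> syms S \<Longrightarrow> lhe s = cr s @ [0] \<and> rhe s = cr s @ [1] \<and> inblk N B s (lhe s) \<and> inblk N B s (rhe s)"
  using I(6) by blast

lemma under_head: "inblk N B s p \<Longrightarrow> prefix (lhe s) p \<or> prefix (rhe s) p"
proof -
  assume h: "inblk N B s p"
  then have "s \<in> syms S" by (rule inblk_syms)
  then have "lhe s = cr s @ [0]" "rhe s = cr s @ [1]" using heads by auto
  then show ?thesis using I(7) h by simp
qed

lemma heads_disj: "s \<in> syms S \<Longrightarrow> prefix (lhe s) x \<Longrightarrow> prefix (rhe s) x \<Longrightarrow> False"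
proof -
  assume "s \<in> syms S" "prefix (lhe s) x" "prefix (rhe s) x"
  then have "prefix (cr s @ [0]) x" "prefix (cr s @ [1]) x" using heads by auto
  then have "prefix (cr s @ [0]) (cr s @ [1]) \<or> prefix (cr s @ [1]) (cr s @ [0])"
    using prefix_same_cases by blast
  then show False by simp
qed

lemma head_order: "s \<in> syms S \<Longrightarrow> prefix (lhe s) x \<Longrightarrow> prefix (rhe s) y \<Longrightarrow> x < y"
  using heads sibling_less[of 0 1 "cr s" x y] by auto

lemma R_prefix: "x \<in> R s \<Longrightarrow> prefix (cr s) x"
  unfolding rnodes_def using below_crown by (auto simp: strict_prefix_def)

lemma R_fin: "finite (R s)"
proof -
  have "R s \<subseteq> insert (cr s) N" unfolding rnodes_def using inblk_N by auto
  then show ?thesis using finN finite_subset by blast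
qed

lemma R_inblk: "x \<in> R s \<Longrightarrow> x \<noteq> cr s \<Longrightarrow> inblk N B s x"
  unfolding rnodes_def by auto

lemma inblk_R: "inblk N B s x \<Longrightarrow> x \<in> R s"
  unfolding rnodes_def by auto

lemma rpar_iff: "rpar N B cr s u w \<longleftrightarrow> u \<in> R s \<and> w \<in> R s \<and> w \<noteq> cr s \<and> strict_prefix u w \<and>
    \<not> (\<exists>z\<in>R s. strict_prefix u z \<and> strict_prefix z w)"
  unfolding rpar_def strict_anc_iff by blast

lemma rdesc_imp: "rdesc N B cr s u w \<Longrightarrow> u = w \<or> (u \<in> R s \<and> w \<in> R s \<and> strict_prefix u w)"
  unfolding rdesc_def
proof (induction rule: rtranclp_induct)
  case base then show ?case by simp
next
  case (step y z)
  then have "y \<in> R s" "z \<in> R s" "strict_prefix y z" using rpar_iff by auto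
  then show ?case using step.IH by (auto intro: prefix_order.less_trans)
qed

lemma max_length_elem: "finite C \<Longrightarrow> u \<in> C \<Longrightarrow> \<exists>x\<in>C. \<forall>y\<in>C. length y \<le> length (x::'b list)"
proof -
  assume f: "finite C" "u \<in> C"
  let ?n = "Max (length ` C)"
  have "?n \<in> length ` C" using f by (intro Max_in) auto
  then obtain x where "x \<in> C" "length x = ?n" by auto
  moreover have "\<forall>y\<in>C. length y \<le> ?n" using f by simp
  ultimately have "\<forall>y\<in>C. length y \<le> length x" by simp
  with \<open>x \<in> C\<close> show ?thesis by blast
qed

lemma min_length_elem: "finite C \<Longrightarrow> u \<in> C \<Longrightarrow> \<exists>x\<in>C. \<forall>y\<in>C. length x \<le> length (y::'b list)"
proof -
  assume f: "finite C" "u \<in> C"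
  let ?n = "Min (length ` C)"
  have "?n \<in> length ` C" using f by (intro Min_in) auto
  then obtain x where "x \<in> C" "length x = ?n" by auto
  moreover have "\<forall>y\<in>C. ?n \<le> length y" using f by simp
  ultimately have "\<forall>y\<in>C. length x \<le> length y" by simp
  with \<open>x \<in> C\<close> show ?thesis by blast
qed

lemma rdesc_intro: assumes "u \<in> R s" "w \<in> R s" "prefix u w" shows "rdesc N B cr s u w"
  using assms
proof (induction "length w" arbitrary: w rule: less_induct)
  case less
  show ?case
  proof (cases "u = w")
    case True then show ?thesis by (simp add: rdesc_def)
  next
    case False
    then have sp: "strict_prefix u w" using less.prems by (simp add: strict_prefix_def)
    let ?C = "{x \<in> R s. prefix u x \<and> strict_prefix x w}"
    have fC: "finite ?C" using R_fin by simp
    have uC: "u \<in> ?C" using less.prems sp by simp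
    obtain x where x: "x \<in> ?C" "\<forall>y\<in>?C. length y \<le> length x"
      using max_length_elem[OF fC uC] by blast
    have wne: "w \<noteq> cr s"
    proof
      assume "w = cr s"
      then have "prefix w u" using R_prefix less.prems by blast
      moreover have "prefix u w" "u \<noteq> w" using sp by (auto simp: strict_prefix_def)
      ultimately show False using prefix_order.antisym by blast
    qed
    have "rpar N B cr s x w" unfolding rpar_iff
    proof (intro conjI)
      show "x \<in> R s" "w \<in> R s" "w \<noteq> cr s" "strict_prefix x w" using x less.prems wne by auto
      show "\<not> (\<exists>z\<in>R s. strict_prefix x z \<and> strict_prefix z w)"
      proof
        assume "\<exists>z\<in>R s. strict_prefix x z \<and> strict_prefix z w"
        then obtain z where z: "z \<in> R s" "strict_prefix x z" "strict_prefix z w" by blast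
        then have "z \<in> ?C" using x by (auto simp: strict_prefix_def intro: prefix_order.trans)
        then have "length z \<le> length x" using x by blast
        moreover have "length x < length z" using z(2) prefix_length_less by blast
        ultimately show False by simp
      qed
    qed
    moreover have "rdesc N B cr s u x"
    proof -
      have "length x < length w" using x prefix_length_less by blast
      then show ?thesis using less.hyps x less.prems(1) by blast
    qed
    ultimately show ?thesis unfolding rdesc_def by (meson rtranclp.rtrancl_into_rtrancl)
  qed
qed

lemma rdesc_iff: "u \<in> R s \<Longrightarrow> rdesc N B cr s u w \<longleftrightarrow> w \<in> R s \<and> prefix u w"
proof
  assume "u \<in> R s" "rdesc N B cr s u w"
  then show "w \<in> R s \<and> prefix u w" using rdesc_imp by (auto simp: strict_prefix_def)
next
  assume "u \<in> R s" "w \<in> R s \<and> prefix u w"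
  then show "rdesc N B cr s u w" using rdesc_intro by blast
qed

lemma rleaf_iff: assumes "s \<in> syms S" shows "rleaf N B cr s v \<longleftrightarrow> v \<in> tleaves N \<and> inblk N B s v"
proof
  assume h: "v \<in> tleaves N \<and> inblk N B s v"
  have "\<not> rpar N B cr s v w" for w
  proof
    assume "rpar N B cr s v w"
    then have "w \<in> R s" "w \<noteq> cr s" "strict_prefix v w" using rpar_iff by auto
    then have "w \<in> N" using R_inblk inblk_N by blast
    then have "w = v" using leaf_no_desc I(1) h \<open>strict_prefix v w\<close> by (auto simp: strict_prefix_def)
    then show False using \<open>strict_prefix v w\<close> by simp
  qed
  then show "rleaf N B cr s v" using h inblk_R by (auto simp: rleaf_def)
next
  assume h: "rleaf N B cr s v"
  then have vR: "v \<in> R s" and nc: "\<And>w. \<not> rpar N B cr s v w" by (auto simp: rleaf_def)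
  have desc_none: "\<And>w. w \<in> R s \<Longrightarrow> strict_prefix v w \<Longrightarrow> False"
  proof -
    fix w assume "w \<in> R s" "strict_prefix v w"
    then have "rdesc N B cr s v w" using rdesc_intro vR by (simp add: strict_prefix_def)
    moreover have "v \<noteq> w" using \<open>strict_prefix v w\<close> by simp
    ultimately obtain y where "rpar N B cr s v y" unfolding rdesc_def by (metis converse_rtranclpE)
    then show False using nc by blast
  qed
  have "v \<noteq> cr s"
  proof
    assume "v = cr s"
    moreover have "lhe s \<in> R s" "strict_prefix (cr s) (lhe s)" using heads assms inblk_R below_crown by blast+
    ultimately show False using desc_none by blast
  qed
  then have ib: "inblk N B s v" using R_inblk vR by blast
  then obtain l where l: "l \<in> tleaves N" "prefix v l" "inblk N B s l" using I(8) by blast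
  have "l = v"
  proof (rule ccontr)
    assume "l \<noteq> v"
    then have "strict_prefix v l" using l by (simp add: strict_prefix_def)
    then show False using desc_none inblk_R l by blast
  qed
  then show "v \<in> tleaves N \<and> inblk N B s v" using l ib by simp
qed

end

context FT begin

definition LS :: "'a \<Rightarrow> node set" where "LS s = {v. rleaf N B cr s v}"

lemma LS_iff: "s \<in> syms S \<Longrightarrow> l \<in> LS s \<longleftrightarrow> l \<in> tleaves N \<and> inblk N B s l"
  unfolding LS_def using rleaf_iff by blast

lemma LS_fin: "finite (LS s)"
proof -
  have "LS s \<subseteq> R s" unfolding LS_def rleaf_def by auto
  then show ?thesis using R_fin finite_subset by blast
qed

lemma lhe_leaf: "s \<in> syms S \<Longrightarrow> \<exists>l\<in>LS s. prefix (lhe s) l"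
  using heads I(8) LS_iff by blast

lemma rhe_leaf: "s \<in> syms S \<Longrightarrow> \<exists>l\<in>LS s. prefix (rhe s) l"
  using heads I(8) LS_iff by blast

lemma lwt_props: assumes "s \<in> syms S"
  shows "lwt N B cr s \<in> LS s" "\<forall>l\<in>LS s. lwt N B cr s \<le> l" "prefix (lhe s) (lwt N B cr s)"
proof -
  have ne: "LS s \<noteq> {}" using lhe_leaf assms by blast
  have eq: "lwt N B cr s = Min (LS s)" unfolding lwt_def LS_def by simp
  show m: "lwt N B cr s \<in> LS s" using eq Min_in LS_fin ne by simp
  show le: "\<forall>l\<in>LS s. lwt N B cr s \<le> l" using eq Min_le LS_fin by simp
  obtain l0 where l0: "l0 \<in> LS s" "prefix (lhe s) l0" using lhe_leaf assms by blast
  have "inblk N B s (lwt N B cr s)" using m LS_iff assms by blast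
  then have "prefix (lhe s) (lwt N B cr s) \<or> prefix (rhe s) (lwt N B cr s)" by (rule under_head)
  moreover have "\<not> prefix (rhe s) (lwt N B cr s)"
  proof
    assume "prefix (rhe s) (lwt N B cr s)"
    then have "l0 < lwt N B cr s" using head_order assms l0 by blast
    with le l0 show False by fastforce
  qed
  ultimately show "prefix (lhe s) (lwt N B cr s)" by blast
qed

lemma rwt_props: assumes "s \<in> syms S"
  shows "rwt N B cr s \<in> LS s" "\<forall>l\<in>LS s. l \<le> rwt N B cr s" "prefix (rhe s) (rwt N B cr s)"
proof -
  have ne: "LS s \<noteq> {}" using lhe_leaf assms by blast
  have eq: "rwt N B cr s = Max (LS s)" unfolding rwt_def LS_def by simp
  show m: "rwt N B cr s \<in> LS s" using eq Max_in LS_fin ne by simp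
  show le: "\<forall>l\<in>LS s. l \<le> rwt N B cr s" using eq Max_ge LS_fin by simp
  obtain l0 where l0: "l0 \<in> LS s" "prefix (rhe s) l0" using rhe_leaf assms by blast
  have "inblk N B s (rwt N B cr s)" using m LS_iff assms by blast
  then have "prefix (lhe s) (rwt N B cr s) \<or> prefix (rhe s) (rwt N B cr s)" by (rule under_head)
  moreover have "\<not> prefix (lhe s) (rwt N B cr s)"
  proof
    assume "prefix (lhe s) (rwt N B cr s)"
    then have "rwt N B cr s < l0" using head_order assms l0 by blast
    with le l0 show False by fastforce
  qed
  ultimately show "prefix (rhe s) (rwt N B cr s)" by blast
qed

lemma lhe_R: "s \<in> syms S \<Longrightarrow> lhe s \<in> R s" using heads inblk_R by blast
lemma rhe_R: "s \<in> syms S \<Longrightarrow> rhe s \<in> R s" using heads inblk_R by blast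

lemma lwing_iff: assumes "s \<in> syms S"
  shows "w \<in> lwing N B cr lhe s \<longleftrightarrow> w \<in> R s \<and> prefix (lhe s) w \<and> prefix w (lwt N B cr s)"
proof -
  have "lwt N B cr s \<in> R s" using lwt_props(1) assms LS_iff inblk_R by blast
  then show ?thesis unfolding lwing_def using rdesc_iff lhe_R assms by auto
qed

lemma rwing_iff: assumes "s \<in> syms S"
  shows "w \<in> rwing N B cr rhe s \<longleftrightarrow> w \<in> R s \<and> prefix (rhe s) w \<and> prefix w (rwt N B cr s)"
proof -
  have "rwt N B cr s \<in> R s" using rwt_props(1) assms LS_iff inblk_R by blast
  then show ?thesis unfolding rwing_def using rdesc_iff rhe_R assms by auto
qed

lemma leaf_prefix_eq: "v \<in> tleaves N \<Longrightarrow> l \<in> tleaves N \<Longrightarrow> prefix v l \<Longrightarrow> v = l"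
  using leaf_no_desc I(1) tleaves_sub by (metis subsetD)

lemma quill_dove:
  assumes s: "s \<in> syms S" and v: "v \<in> tleaves N" "inblk N B s v" and nw: "v \<noteq> lwt N B cr s"
    and nf: "\<not> feather N B cr lhe rhe s v" and hv: "prefix (lhe s) v"
  shows "\<exists>u. inblk N B s u \<and> prefix (lhe s) u \<and> prefix u v \<and> \<not> prefix u (lwt N B cr s) \<and>
           (\<exists>l. l \<in> tleaves N \<and> inblk N B s l \<and> prefix u l \<and> v < l)"
proof -
  let ?lw = "lwt N B cr s"
  have lwl: "?lw \<in> tleaves N" using lwt_props(1) s LS_iff by blast
  let ?W = "{x \<in> R s. prefix (lhe s) x \<and> prefix x v \<and> prefix x ?lw}"
  have fW: "finite ?W" using R_fin by simp
  have hW: "lhe s \<in> ?W" using lhe_R s hv lwt_props(3) s by simp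
  obtain w where w: "w \<in> ?W" "\<forall>y\<in>?W. length y \<le> length w" using max_length_elem[OF fW hW] by blast
  have vW: "v \<notin> ?W" using leaf_prefix_eq v lwl nw by blast
  have vR: "v \<in> R s" using v inblk_R by blast
  let ?C = "{x \<in> R s. strict_prefix w x \<and> prefix x v}"
  have fC: "finite ?C" using R_fin by simp
  have vC: "v \<in> ?C" using w vW vR by (auto simp: strict_prefix_def)
  obtain u where u: "u \<in> ?C" "\<forall>y\<in>?C. length u \<le> length y" using min_length_elem[OF fC vC] by blast
  have uR: "u \<in> R s" and wu: "strict_prefix w u" and uv: "prefix u v" using u by auto
  have lu: "prefix (lhe s) u" using w wu by (auto simp: strict_prefix_def intro: prefix_order.trans)
  have uW: "u \<notin> ?W"
  proof
    assume "u \<in> ?W"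
    then have "length u \<le> length w" using w by blast
    moreover have "length w < length u" using wu prefix_length_less by blast
    ultimately show False by simp
  qed
  then have nlu: "\<not> prefix u ?lw" using uR lu uv by blast
  have ucr: "u \<noteq> cr s"
  proof
    assume "u = cr s"
    then have "strict_prefix u (lhe s)" using heads s by (simp add: strict_prefix_def)
    then show False using lu prefix_order.antisym by (auto simp: strict_prefix_def)
  qed
  have ib: "inblk N B s u" using R_inblk uR ucr by blast
  have rp: "rpar N B cr s w u" unfolding rpar_iff
  proof (intro conjI)
    show "w \<in> R s" "u \<in> R s" "u \<noteq> cr s" "strict_prefix w u" using w uR ucr wu by auto
    show "\<not> (\<exists>z\<in>R s. strict_prefix w z \<and> strict_prefix z u)"
    proof
      assume "\<exists>z\<in>R s. strict_prefix w z \<and> strict_prefix z u"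
      then obtain z where z: "z \<in> R s" "strict_prefix w z" "strict_prefix z u" by blast
      then have "z \<in> ?C" using uv by (auto simp: strict_prefix_def intro: prefix_order.trans)
      then have "length u \<le> length z" using u by blast
      moreover have "length z < length u" using z(3) prefix_length_less by blast
      ultimately show False by simp
    qed
  qed
  have wl: "w \<in> lwing N B cr lhe s" using lwing_iff s w by blast
  have unw: "u \<notin> lwing N B cr lhe s \<union> rwing N B cr rhe s"
  proof
    assume "u \<in> lwing N B cr lhe s \<union> rwing N B cr rhe s"
    then show False
    proof
      assume "u \<in> lwing N B cr lhe s" then show False using lwing_iff s nlu by blast
    next
      assume "u \<in> rwing N B cr rhe s"
      then have "prefix (rhe s) u" using rwing_iff s by blast
      then show False using heads_disj s lu by blast
    qed
  qed
  have q: "quill N B cr lhe rhe s u" unfolding quill_def using rp wl unw by blast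
  have rd: "rdesc N B cr s (lhe s) u" using rdesc_iff lhe_R s uR lu by blast
  have rlv: "rleaf N B cr s v" using rleaf_iff s v by blast
  let ?M = "{l. rleaf N B cr s l \<and> rdesc N B cr s u l}"
  have "v \<noteq> Max ?M" using nf q rd rlv unfolding feather_def by blast
  moreover have vM: "v \<in> ?M" using rlv rdesc_iff uR vR uv by blast
  moreover have fM: "finite ?M"
  proof -
    have "?M \<subseteq> LS s" unfolding LS_def by auto
    then show ?thesis using LS_fin finite_subset by blast
  qed
  moreover have "v \<le> Max ?M" by (rule Max_ge[OF fM vM])
  ultimately have "v < Max ?M" by (simp add: order.strict_iff_order)
  moreover have "Max ?M \<in> ?M" using Max_in[OF fM] vM by blast
  ultimately obtain l where l: "rleaf N B cr s l" "rdesc N B cr s u l" "v < l" by blast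
  then have "l \<in> tleaves N" "inblk N B s l" "prefix u l" using rleaf_iff s rdesc_iff uR by blast+
  then show ?thesis using ib lu uv nlu \<open>v < l\<close> by blast
qed

lemma quill_hawk:
  assumes s: "s \<in> syms S" and v: "v \<in> tleaves N" "inblk N B s v" and nw: "v \<noteq> rwt N B cr s"
    and nf: "\<not> feather N B cr lhe rhe s v" and hv: "prefix (rhe s) v"
  shows "\<exists>u. inblk N B s u \<and> prefix (rhe s) u \<and> prefix u v \<and> \<not> prefix u (rwt N B cr s) \<and>
           (\<exists>l. l \<in> tleaves N \<and> inblk N B s l \<and> prefix u l \<and> l < v)"
proof -
  let ?lw = "rwt N B cr s"
  have lwl: "?lw \<in> tleaves N" using rwt_props(1) s LS_iff by blast
  let ?W = "{x \<in> R s. prefix (rhe s) x \<and> prefix x v \<and> prefix x ?lw}"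
  have fW: "finite ?W" using R_fin by simp
  have hW: "rhe s \<in> ?W" using rhe_R s hv rwt_props(3) s by simp
  obtain w where w: "w \<in> ?W" "\<forall>y\<in>?W. length y \<le> length w" using max_length_elem[OF fW hW] by blast
  have vW: "v \<notin> ?W" using leaf_prefix_eq v lwl nw by blast
  have vR: "v \<in> R s" using v inblk_R by blast
  let ?C = "{x \<in> R s. strict_prefix w x \<and> prefix x v}"
  have fC: "finite ?C" using R_fin by simp
  have vC: "v \<in> ?C" using w vW vR by (auto simp: strict_prefix_def)
  obtain u where u: "u \<in> ?C" "\<forall>y\<in>?C. length u \<le> length y" using min_length_elem[OF fC vC] by blast
  have uR: "u \<in> R s" and wu: "strict_prefix w u" and uv: "prefix u v" using u by auto
  have lu: "prefix (rhe s) u" using w wu by (auto simp: strict_prefix_def intro: prefix_order.trans)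
  have uW: "u \<notin> ?W"
  proof
    assume "u \<in> ?W"
    then have "length u \<le> length w" using w by blast
    moreover have "length w < length u" using wu prefix_length_less by blast
    ultimately show False by simp
  qed
  then have nlu: "\<not> prefix u ?lw" using uR lu uv by blast
  have ucr: "u \<noteq> cr s"
  proof
    assume "u = cr s"
    then have "strict_prefix u (rhe s)" using heads s by (simp add: strict_prefix_def)
    then show False using lu prefix_order.antisym by (auto simp: strict_prefix_def)
  qed
  have ib: "inblk N B s u" using R_inblk uR ucr by blast
  have rp: "rpar N B cr s w u" unfolding rpar_iff
  proof (intro conjI)
    show "w \<in> R s" "u \<in> R s" "u \<noteq> cr s" "strict_prefix w u" using w uR ucr wu by auto
    show "\<not> (\<exists>z\<in>R s. strict_prefix w z \<and> strict_prefix z u)"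
    proof
      assume "\<exists>z\<in>R s. strict_prefix w z \<and> strict_prefix z u"
      then obtain z where z: "z \<in> R s" "strict_prefix w z" "strict_prefix z u" by blast
      then have "z \<in> ?C" using uv by (auto simp: strict_prefix_def intro: prefix_order.trans)
      then have "length u \<le> length z" using u by blast
      moreover have "length z < length u" using z(3) prefix_length_less by blast
      ultimately show False by simp
    qed
  qed
  have wl: "w \<in> rwing N B cr rhe s" using rwing_iff s w by blast
  have unw: "u \<notin> lwing N B cr lhe s \<union> rwing N B cr rhe s"
  proof
    assume "u \<in> lwing N B cr lhe s \<union> rwing N B cr rhe s"
    then show False
    proof
      assume "u \<in> rwing N B cr rhe s" then show False using rwing_iff s nlu by blast
    next
      assume "u \<in> lwing N B cr lhe s"
      then have "prefix (lhe s) u" using lwing_iff s by blast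
      then show False using heads_disj s lu by blast
    qed
  qed
  have q: "quill N B cr lhe rhe s u" unfolding quill_def using rp wl unw by blast
  have rd: "rdesc N B cr s (rhe s) u" using rdesc_iff rhe_R s uR lu by blast
  have rlv: "rleaf N B cr s v" using rleaf_iff s v by blast
  let ?M = "{l. rleaf N B cr s l \<and> rdesc N B cr s u l}"
  have "v \<noteq> Min ?M" using nf q rd rlv unfolding feather_def by blast
  moreover have vM: "v \<in> ?M" using rlv rdesc_iff uR vR uv by blast
  moreover have fM: "finite ?M"
  proof -
    have "?M \<subseteq> LS s" unfolding LS_def by auto
    then show ?thesis using LS_fin finite_subset by blast
  qed
  moreover have "Min ?M \<le> v" by (rule Min_le[OF fM vM])
  ultimately have "Min ?M < v" by (simp add: order.strict_iff_order)
  moreover have "Min ?M \<in> ?M" using Min_in[OF fM] vM by blast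
  ultimately obtain l where l: "rleaf N B cr s l" "rdesc N B cr s u l" "l < v" by blast
  then have "l \<in> tleaves N" "inblk N B s l" "prefix u l" using rleaf_iff s rdesc_iff uR by blast+
  then show ?thesis using ib lu uv nlu \<open>l < v\<close> by blast
qed

end

lemma outleft: "\<not> prefix u (l::nat list) \<Longrightarrow> l < v \<Longrightarrow> prefix u v \<Longrightarrow> prefix u y \<Longrightarrow> l < y"
proof (rule ccontr)
  assume h: "\<not> prefix u l" "l < v" "prefix u v" "prefix u y" "\<not> l < y"
  then have "y \<le> l" by simp
  then have "prefix u l" using interval_prefix[OF h(4) h(3)] h(2) by simp
  with h(1) show False by simp
qed

lemma outright: "\<not> prefix u (l::nat list) \<Longrightarrow> v < l \<Longrightarrow> prefix u v \<Longrightarrow> prefix u y \<Longrightarrow> y < l"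
proof (rule ccontr)
  assume h: "\<not> prefix u l" "v < l" "prefix u v" "prefix u y" "\<not> y < l"
  then have "l \<le> y" by simp
  then have "prefix u l" using interval_prefix[OF h(3) h(4)] h(2) by simp
  with h(1) show False by simp
qed

context FT begin

definition occ :: "'a \<Rightarrow> node \<Rightarrow> bool" where "occ s l \<longleftrightarrow> l \<in> tleaves N \<and> inblk N B s l"

definition "PRE v x y \<longleftrightarrow> (\<exists>l1 l2. occ x l1 \<and> occ y l2 \<and> l1 < l2 \<and> l2 < v)"
definition "POST v x y \<longleftrightarrow> (\<exists>l1 l2. occ x l1 \<and> occ y l2 \<and> v < l1 \<and> l1 < l2)"
definition "PREany v x \<longleftrightarrow> (\<exists>l. occ x l \<and> l < v)"
definition "POSTany v x \<longleftrightarrow> (\<exists>l. occ x l \<and> v < l)"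
definition "NESTL v a b \<longleftrightarrow> (PRE v a b \<and> POST v b a) \<or> (PRE v b a \<and> POST v a b) \<or>
   (PREany v a \<and> PREany v b \<and> POST v a b \<and> POST v b a) \<or> (PRE v a b \<and> PRE v b a \<and> POSTany v a \<and> POSTany v b)"

lemma NESTL_sym: "NESTL v a b \<Longrightarrow> NESTL v b a"
  unfolding NESTL_def by blast

lemma wt_facts: assumes "s \<in> syms S" "v \<in> tleaves N" "inblk N B s v"
    "v \<noteq> lwt N B cr s" "v \<noteq> rwt N B cr s"
  shows "occ s (lwt N B cr s)" "lwt N B cr s < v" "prefix (lhe s) (lwt N B cr s)"
    "occ s (rwt N B cr s)" "v < rwt N B cr s" "prefix (rhe s) (rwt N B cr s)"
proof -
  have vL: "v \<in> LS s" using assms LS_iff by blast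
  show "occ s (lwt N B cr s)" "occ s (rwt N B cr s)" using lwt_props(1) rwt_props(1) assms(1) LS_iff occ_def by blast+
  show "prefix (lhe s) (lwt N B cr s)" "prefix (rhe s) (rwt N B cr s)" using lwt_props(3) rwt_props(3) assms(1) by blast+
  have "lwt N B cr s \<le> v" "v \<le> rwt N B cr s" using lwt_props(2) rwt_props(2) assms(1) vL by blast+
  then show "lwt N B cr s < v" "v < rwt N B cr s" using assms(4,5) by (simp_all add: order.strict_iff_order)
qed

lemma occ_below: "occ s l \<Longrightarrow> strict_prefix (cr s) l"
  unfolding occ_def using below_crown by blast

lemma caseA:
  assumes v: "v \<in> tleaves N" "inblk N B a v" "inblk N B b v"
    and nw: "v \<noteq> lwt N B cr a" "v \<noteq> rwt N B cr a" "v \<noteq> lwt N B cr b" "v \<noteq> rwt N B cr b"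
    and nf: "\<not> feather N B cr lhe rhe a v" "\<not> feather N B cr lhe rhe b v"
    and c: "cr a = cr b"
  shows "NESTL v a b"
proof -
  have sa: "a \<in> syms S" and sb: "b \<in> syms S" using v inblk_syms by blast+
  have hh: "lhe a = lhe b" "rhe a = rhe b" using heads sa sb c by auto
  note A = wt_facts[OF sa v(1,2) nw(1,2)] and Bf = wt_facts[OF sb v(1,3) nw(3,4)]
  consider "prefix (lhe a) v" | "prefix (rhe a) v" using under_head v(2) by blast
  then show ?thesis
  proof cases
    case 1
    obtain ua la where a1: "prefix (lhe a) ua" "occ a la" "prefix ua la" "v < la"
      using quill_dove[OF sa v(1,2) nw(1) nf(1) 1] occ_def by blast
    obtain ub lb where b1: "prefix (lhe b) ub" "occ b lb" "prefix ub lb" "v < lb"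
      using quill_dove[OF sb v(1,3) nw(3) nf(2)] 1 hh occ_def by metis
    have "la < rwt N B cr b" using head_order[OF sb] a1 hh Bf(6) prefix_order.trans by metis
    moreover have "lb < rwt N B cr a" using head_order[OF sa] b1 hh A(6) prefix_order.trans by metis
    ultimately have "POST v a b" "POST v b a" using a1 b1 A Bf unfolding POST_def by blast+
    moreover have "PREany v a" "PREany v b" using A Bf unfolding PREany_def by blast+
    ultimately show ?thesis unfolding NESTL_def by blast
  next
    case 2
    obtain ua la where a1: "prefix (rhe a) ua" "occ a la" "prefix ua la" "la < v"
      using quill_hawk[OF sa v(1,2) nw(2) nf(1) 2] occ_def by blast
    obtain ub lb where b1: "prefix (rhe b) ub" "occ b lb" "prefix ub lb" "lb < v"
      using quill_hawk[OF sb v(1,3) nw(4) nf(2)] 2 hh occ_def by metis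
    have "lwt N B cr a < lb" using head_order[OF sa] b1 hh A(3) prefix_order.trans by metis
    moreover have "lwt N B cr b < la" using head_order[OF sb] a1 hh Bf(3) prefix_order.trans by metis
    ultimately have "PRE v a b" "PRE v b a" using a1 b1 A Bf unfolding PRE_def by blast+
    moreover have "POSTany v a" "POSTany v b" using A Bf unfolding POSTany_def by blast+
    ultimately show ?thesis unfolding NESTL_def by blast
  qed
qed

end

context FT begin

lemma pfx_cmp: "prefix x v \<Longrightarrow> prefix y v \<Longrightarrow> prefix x y \<or> strict_prefix y x"
  using prefix_same_cases by (auto simp: strict_prefix_def)

lemma caseB:
  assumes v: "v \<in> tleaves N" "inblk N B x v" "inblk N B y v"
    and nw: "v \<noteq> lwt N B cr x" "v \<noteq> rwt N B cr x" "v \<noteq> lwt N B cr y" "v \<noteq> rwt N B cr y"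
    and nf: "\<not> feather N B cr lhe rhe x v" "\<not> feather N B cr lhe rhe y v"
    and lb: "LB N B cr x y v"
  shows "NESTL v x y"
proof -
  have sx: "x \<in> syms S" and sy: "y \<in> syms S" using v inblk_syms by blast+
  note X = wt_facts[OF sx v(1,2) nw(1,2)] and Y = wt_facts[OF sy v(1,3) nw(3,4)]
  obtain p g where pg: "strict_prefix p g" "prefix g v" "inblk N B x p"
     "prefix p (cr y)" "strict_prefix (cr y) g"
     "\<forall>z. strict_prefix p z \<longrightarrow> strict_prefix z g \<longrightarrow> \<not> inblk N B x z"
     "\<forall>z. prefix g z \<longrightarrow> prefix z v \<longrightarrow> (inblk N B x z \<longleftrightarrow> inblk N B y z)"
    using lb unfolding LB_def by blast
  have pv: "prefix p v" using pg(1,2) by (auto simp: strict_prefix_def intro: prefix_order.trans)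
  have Xp: "prefix p l" if "occ y l" for l
    using occ_below[OF that] pg(4) by (auto simp: strict_prefix_def intro: prefix_order.trans)
  have shared: "inblk N B y u" if "inblk N B x u" "prefix u v" "\<not> prefix p u \<or> prefix u v"
      "strict_prefix p u" for u
  proof -
    have "\<not> strict_prefix u g" using pg(6) that by blast
    then have "prefix g u" using pfx_cmp[OF that(2) pg(2)] by (auto simp: strict_prefix_def)
    then show ?thesis using pg(7) that by blast
  qed
  show ?thesis
  proof (cases "\<exists>l1. occ x l1 \<and> l1 < v \<and> \<not> prefix p l1")
    case L: True
    show ?thesis
    proof (cases "\<exists>l3. occ x l3 \<and> v < l3 \<and> \<not> prefix p l3")
      case True
      obtain l1 where l1: "occ x l1" "l1 < v" "\<not> prefix p l1" using L by blast
      obtain l3 where l3: "occ x l3" "v < l3" "\<not> prefix p l3" using True by blast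
      have "l1 < lwt N B cr y" using outleft[OF l1(3) l1(2) pv Xp[OF Y(1)]] .
      then have "PRE v x y" using l1 Y unfolding PRE_def by blast
      moreover have "rwt N B cr y < l3" using outright[OF l3(3) l3(2) pv Xp[OF Y(4)]] .
      then have "POST v y x" using l3 Y unfolding POST_def by blast
      ultimately show ?thesis unfolding NESTL_def by blast
    next
      case False
      then have prw: "prefix p (rwt N B cr x)" using X by blast
      have hp: "prefix (rhe x) p"
      proof -
        have "prefix (lhe x) p \<or> prefix (rhe x) p" using under_head pg(3) by blast
        moreover have "\<not> prefix (lhe x) p" using heads_disj[OF sx] prw X(6) prefix_order.trans by blast
        ultimately show ?thesis by blast
      qed
      obtain ux lx where ux: "inblk N B x ux" "prefix (rhe x) ux" "prefix ux v" "\<not> prefix ux (rwt N B cr x)"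
        "occ x lx" "prefix ux lx" "lx < v"
        using quill_hawk[OF sx v(1,2) nw(2) nf(1)] hp pv prefix_order.trans occ_def by metis
      have spu: "strict_prefix p ux"
      proof -
        have "prefix p ux \<or> strict_prefix ux p" using pfx_cmp[OF pv ux(3)] .
        moreover have "\<not> prefix ux p" using ux(4) prw prefix_order.trans by blast
        ultimately show ?thesis by (auto simp: strict_prefix_def)
      qed
      have iyu: "inblk N B y ux" using shared ux(1,3) spu by blast
      have allX: "lwt N B cr x < l" if "prefix p l" for l
        using head_order[OF sx X(3)] hp that prefix_order.trans by blast
      have pxy: "PRE v x y" using allX[OF Xp[OF Y(1)]] X Y unfolding PRE_def by blast
      consider "prefix (rhe y) ux" | "prefix (lhe y) ux" using under_head iyu by blast
      then show ?thesis
      proof cases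
        case 1
        have "lwt N B cr y < lx" using head_order[OF sy Y(3)] 1 ux(6) prefix_order.trans by blast
        then have "PRE v y x" using ux Y unfolding PRE_def by blast
        moreover have "POSTany v x" "POSTany v y" using X Y unfolding POSTany_def by blast+
        ultimately show ?thesis using pxy unfolding NESTL_def by blast
      next
        case 2
        obtain uy ly where uy: "prefix uy v" "\<not> prefix uy (lwt N B cr y)" "occ y ly" "prefix uy ly" "v < ly"
          using quill_dove[OF sy v(1,3) nw(3) nf(2)] 2 ux(3) prefix_order.trans occ_def by metis
        consider "prefix ux uy" | "strict_prefix uy ux" using pfx_cmp[OF ux(3) uy(1)] by blast
        then show ?thesis
        proof cases
          case 1
          have "ly < rwt N B cr x" using outright[OF ux(4) X(5) ux(3)] 1 uy(4) prefix_order.trans by blast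
          then have "POST v y x" using uy X unfolding POST_def by blast
          then show ?thesis using pxy unfolding NESTL_def by blast
        next
          case 2
          have "prefix uy lx" using 2 ux(6) by (auto simp: strict_prefix_def intro: prefix_order.trans)
          then have "lwt N B cr y < lx" using outleft[OF uy(2) Y(2) uy(1)] by blast
          then have "PRE v y x" using ux Y unfolding PRE_def by blast
          moreover have "POSTany v x" "POSTany v y" using X Y unfolding POSTany_def by blast+
          ultimately show ?thesis using pxy unfolding NESTL_def by blast
        qed
      qed
    qed
  next
    case False
    then have plw: "prefix p (lwt N B cr x)" using X by blast
    have hp: "prefix (lhe x) p"
    proof -
      have "prefix (lhe x) p \<or> prefix (rhe x) p" using under_head pg(3) by blast
      moreover have "\<not> prefix (rhe x) p" using heads_disj[OF sx] plw X(3) prefix_order.trans by blast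
      ultimately show ?thesis by blast
    qed
    obtain ux lx where ux: "inblk N B x ux" "prefix (lhe x) ux" "prefix ux v" "\<not> prefix ux (lwt N B cr x)"
      "occ x lx" "prefix ux lx" "v < lx"
      using quill_dove[OF sx v(1,2) nw(1) nf(1)] hp pv prefix_order.trans occ_def by metis
    have spu: "strict_prefix p ux"
    proof -
      have "prefix p ux \<or> strict_prefix ux p" using pfx_cmp[OF pv ux(3)] .
      moreover have "\<not> prefix ux p" using ux(4) plw prefix_order.trans by blast
      ultimately show ?thesis by (auto simp: strict_prefix_def)
    qed
    have iyu: "inblk N B y ux" using shared ux(1,3) spu by blast
    have allX: "l < rwt N B cr x" if "prefix p l" for l
      using head_order[OF sx _ X(6)] hp that prefix_order.trans by blast
    have pyx: "POST v y x" using allX[OF Xp[OF Y(4)]] X Y unfolding POST_def by blast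
    consider "prefix (lhe y) ux" | "prefix (rhe y) ux" using under_head iyu by blast
    then show ?thesis
    proof cases
      case 1
      have "lx < rwt N B cr y" using head_order[OF sy _ Y(6)] 1 ux(6) prefix_order.trans by blast
      then have "POST v x y" using ux Y unfolding POST_def by blast
      moreover have "PREany v x" "PREany v y" using X Y unfolding PREany_def by blast+
      ultimately show ?thesis using pyx unfolding NESTL_def by blast
    next
      case 2
      obtain uy ly where uy: "prefix uy v" "\<not> prefix uy (rwt N B cr y)" "occ y ly" "prefix uy ly" "ly < v"
        using quill_hawk[OF sy v(1,3) nw(4) nf(2)] 2 ux(3) prefix_order.trans occ_def by metis
      consider "prefix ux uy" | "strict_prefix uy ux" using pfx_cmp[OF ux(3) uy(1)] by blast
      then show ?thesis
      proof cases
        case 1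
        have "lwt N B cr x < ly" using outleft[OF ux(4) X(2) ux(3)] 1 uy(4) prefix_order.trans by blast
        then have "PRE v x y" using uy X unfolding PRE_def by blast
        then show ?thesis using pyx unfolding NESTL_def by blast
      next
        case 2
        have "prefix uy lx" using 2 ux(6) by (auto simp: strict_prefix_def intro: prefix_order.trans)
        then have "lx < rwt N B cr y" using outright[OF uy(2) Y(5) uy(1)] by blast
        then have "POST v x y" using ux Y unfolding POST_def by blast
        moreover have "PREany v x" "PREany v y" using X Y unfolding PREany_def by blast+
        ultimately show ?thesis using pyx unfolding NESTL_def by blast
      qed
    qed
  qed
qed

lemma core:
  assumes v: "v \<in> tleaves N" "inblk N B a v" "inblk N B b v" and ab: "a \<noteq> b"
    and nw: "v \<noteq> lwt N B cr a" "v \<noteq> rwt N B cr a" "v \<noteq> lwt N B cr b" "v \<noteq> rwt N B cr b"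
    and nf: "\<not> feather N B cr lhe rhe a v" "\<not> feather N B cr lhe rhe b v"
  shows "NESTL v a b"
proof -
  have "LAM N B cr a b v" using I(9) v ab by blast
  then consider "LA N B cr a b v" | "LB N B cr a b v" | "LB N B cr b a v" unfolding LAM_def by blast
  then show ?thesis
  proof cases
    case 1 then show ?thesis using caseA assms unfolding LA_def by blast
  next
    case 2 then show ?thesis using caseB assms by blast
  next
    case 3 then show ?thesis using caseB[OF v(1,3,2) nw(3,4,1,2) nf(2,1)] NESTL_sym by blast
  qed
qed

end

lemma fol_app: "x \<in> set A \<Longrightarrow> y \<in> set B \<Longrightarrow> followed (A @ B) x y"
proof -
  assume "x \<in> set A" "y \<in> set B"
  then obtain p q where "p < length A" "A!p = x" "q < length B" "B!q = y" by (meson in_set_conv_nth)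
  then show ?thesis unfolding followed_def
    by (intro exI[of _ p] exI[of _ "length A + q"]) (auto simp: nth_append)
qed

lemma fol_concat: assumes "k1 < k2" "k2 < length T" "x \<in> set (T!k1)" "y \<in> set (T!k2)"
  shows "followed (concat T) x y"
proof -
  have k: "k1 < length (take k2 T)" using assms by simp
  have "take k2 T ! k1 \<in> set (take k2 T)" using nth_mem[OF k] .
  then have "T!k1 \<in> set (take k2 T)" using assms by simp
  then have xin: "x \<in> set (concat (take k2 T))" using assms(3) by auto
  have "drop k2 T = T!k2 # drop (Suc k2) T" using assms(2) by (simp add: Cons_nth_drop_Suc)
  then have yin: "y \<in> set (concat (drop k2 T))" using assms(4) by simp
  have eq: "concat (take k2 T) @ concat (drop k2 T) = concat T"
    by (simp flip: concat_append)
  have "followed (concat (take k2 T) @ concat (drop k2 T)) x y" using fol_app[OF xin yin] .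
  then show ?thesis using eq by simp
qed

lemma fol_any: assumes "x \<in> set xs" "y \<in> set xs" "x \<noteq> y"
  shows "followed xs x y \<or> followed xs y x"
proof -
  obtain p q where pq: "p < length xs" "xs!p = x" "q < length xs" "xs!q = y" using assms by (meson in_set_conv_nth)
  then have "p \<noteq> q" using assms(3) by auto
  then have "p < q \<or> q < p" by arith
  then show ?thesis unfolding followed_def using pq by blast
qed

context FT begin

lemma occ_idx: assumes "occ s l"
  shows "\<exists>j<length S. l = leaf_list N ! j \<and> s \<in> set (S!j)"
proof -
  have "l \<in> set (leaf_list N)" using assms leaf_list_props(1)[OF finN] by (simp add: occ_def)
  then obtain j where j: "j < length (leaf_list N)" "l = leaf_list N ! j" by (auto simp: in_set_conv_nth)
  then have "B l = Some (S!j)" "j < length S" using I(4,5) by auto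
  then show ?thesis using assms j unfolding occ_def inblk_def by auto
qed

lemma idx_less: "j < length S \<Longrightarrow> k < length S \<Longrightarrow> leaf_list N ! j < leaf_list N ! k \<longleftrightarrow> j < k"
  using leaf_list_index_less[OF finN] I(4) by simp

context
  fixes i v assumes iv: "i < length S" "leaf_list N ! i = v"
begin

lemma PRE_fol: "PRE v x y \<Longrightarrow> followed (concat (take i S)) x y"
proof -
  assume "PRE v x y"
  then obtain l1 l2 where l: "occ x l1" "occ y l2" "l1 < l2" "l2 < v" unfolding PRE_def by blast
  note l1occ = l(1) and l2occ = l(2)
  obtain j1 where j1: "j1 < length S" "l1 = leaf_list N ! j1" "x \<in> set (S!j1)" using occ_idx[OF l1occ] by blast
  obtain j2 where j2: "j2 < length S" "l2 = leaf_list N ! j2" "y \<in> set (S!j2)" using occ_idx[OF l2occ] by blast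
  note j = j1 j2
  have "j1 < j2" "j2 < i" using idx_less j l iv by auto
  then show ?thesis using fol_concat[of j1 j2 "take i S" x y] j iv by simp
qed

lemma POST_fol: "POST v x y \<Longrightarrow> followed (concat (drop (Suc i) S)) x y"
proof -
  assume "POST v x y"
  then obtain l1 l2 where l: "occ x l1" "occ y l2" "v < l1" "l1 < l2" unfolding POST_def by blast
  note l1occ = l(1) and l2occ = l(2)
  obtain j1 where j1: "j1 < length S" "l1 = leaf_list N ! j1" "x \<in> set (S!j1)" using occ_idx[OF l1occ] by blast
  obtain j2 where j2: "j2 < length S" "l2 = leaf_list N ! j2" "y \<in> set (S!j2)" using occ_idx[OF l2occ] by blast
  note j = j1 j2
  have "i < j1" "j1 < j2" using idx_less j l iv by auto
  then show ?thesis using fol_concat[of "j1 - Suc i" "j2 - Suc i" "drop (Suc i) S" x y] j iv by simp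
qed

lemma PREany_fol: "PREany v x \<Longrightarrow> PREany v y \<Longrightarrow> x \<noteq> y \<Longrightarrow>
   followed (concat (take i S)) x y \<or> followed (concat (take i S)) y x"
proof -
  assume h: "PREany v x" "PREany v y" "x \<noteq> y"
  obtain l1 l2 where l: "occ x l1" "l1 < v" "occ y l2" "l2 < v" using h unfolding PREany_def by blast
  note l1occ = l(1) and l2occ = l(3)
  obtain j1 where j1: "j1 < length S" "l1 = leaf_list N ! j1" "x \<in> set (S!j1)" using occ_idx[OF l1occ] by blast
  obtain j2 where j2: "j2 < length S" "l2 = leaf_list N ! j2" "y \<in> set (S!j2)" using occ_idx[OF l2occ] by blast
  note j = j1 j2
  have ji: "j1 < i" "j2 < i" using idx_less j l iv by auto
  have mem: "S!j \<in> set (take i S)" if "j < i" for j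
  proof -
    have "j < length (take i S)" using that iv by simp
    then have "take i S ! j \<in> set (take i S)" by (rule nth_mem)
    moreover have "take i S ! j = S!j" using that by simp
    ultimately show ?thesis by simp
  qed
  have "x \<in> set (concat (take i S))" using mem[OF ji(1)] j1(3) unfolding set_concat by blast
  moreover have "y \<in> set (concat (take i S))" using mem[OF ji(2)] j2(3) unfolding set_concat by blast
  ultimately have "x \<in> set (concat (take i S))" "y \<in> set (concat (take i S))" by blast+
  then show ?thesis by (rule fol_any[OF _ _ h(3)])
qed

lemma POSTany_fol: "POSTany v x \<Longrightarrow> POSTany v y \<Longrightarrow> x \<noteq> y \<Longrightarrow>
   followed (concat (drop (Suc i) S)) x y \<or> followed (concat (drop (Suc i) S)) y x"
proof -
  assume h: "POSTany v x" "POSTany v y" "x \<noteq> y"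
  obtain l1 l2 where l: "occ x l1" "v < l1" "occ y l2" "v < l2" using h unfolding POSTany_def by blast
  note l1occ = l(1) and l2occ = l(3)
  obtain j1 where j1: "j1 < length S" "l1 = leaf_list N ! j1" "x \<in> set (S!j1)" using occ_idx[OF l1occ] by blast
  obtain j2 where j2: "j2 < length S" "l2 = leaf_list N ! j2" "y \<in> set (S!j2)" using occ_idx[OF l2occ] by blast
  note j = j1 j2
  have ji: "i < j1" "i < j2" using idx_less j l iv by auto
  have mem: "S!j \<in> set (drop (Suc i) S)" if "i < j" "j < length S" for j
  proof -
    have "j - Suc i < length (drop (Suc i) S)" using that by simp
    then have "drop (Suc i) S ! (j - Suc i) \<in> set (drop (Suc i) S)" by (rule nth_mem)
    moreover have "drop (Suc i) S ! (j - Suc i) = S!j" using that by simp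
    ultimately show ?thesis by simp
  qed
  have "x \<in> set (concat (drop (Suc i) S))" using mem[OF ji(1) j1(1)] j1(3) unfolding set_concat by blast
  moreover have "y \<in> set (concat (drop (Suc i) S))" using mem[OF ji(2) j2(1)] j2(3) unfolding set_concat by blast
  ultimately have "x \<in> set (concat (drop (Suc i) S))" "y \<in> set (concat (drop (Suc i) S))" by blast+
  then show ?thesis by (rule fol_any[OF _ _ h(3)])
qed

lemma NESTL_nested: "NESTL v a b \<Longrightarrow> a \<noteq> b \<Longrightarrow> nested S i a b"
proof -
  assume h: "NESTL v a b" "a \<noteq> b"
  have ab: "{a, b} = {a, b}" "{b, a} = {a, b}" by auto
  consider "PRE v a b \<and> POST v b a" | "PRE v b a \<and> POST v a b"
    | "PREany v a \<and> PREany v b \<and> POST v a b \<and> POST v b a"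
    | "PRE v a b \<and> PRE v b a \<and> POSTany v a \<and> POSTany v b" using h unfolding NESTL_def by blast
  then show ?thesis
  proof cases
    case 1 then show ?thesis unfolding nested_def using PRE_fol POST_fol ab by blast
  next
    case 2 then show ?thesis unfolding nested_def using PRE_fol POST_fol ab by blast
  next
    case 3
    then have "followed (concat (take i S)) a b \<or> followed (concat (take i S)) b a" using PREany_fol h(2) by blast
    then show ?thesis unfolding nested_def using 3 POST_fol ab by blast
  next
    case 4
    then have "followed (concat (drop (Suc i) S)) a b \<or> followed (concat (drop (Suc i) S)) b a" using POSTany_fol h(2) by blast
    then show ?thesis unfolding nested_def using 4 PRE_fol ab by blast
  qed
qed

end
end

theorem lemma4:
  fixes S :: "'a list list" and N :: "node set" and B :: "node \<Rightarrow> 'a list option"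
    and cr lhe rhe :: "'a \<Rightarrow> node" and v :: node and i :: nat and a b :: 'a and \<beta> :: "'a list"
  assumes "blocked_twice S"
    and "deriv S N B cr lhe rhe"
    and "v \<in> tleaves N" and "i < length S" and "leaf_list N ! i = v"
    and "B v = Some \<beta>" and "a \<in> set \<beta>" and "b \<in> set \<beta>" and "a \<noteq> b"
    and "v \<noteq> lwt N B cr a" and "v \<noteq> rwt N B cr a"
    and "v \<noteq> lwt N B cr b" and "v \<noteq> rwt N B cr b"
    and "\<not> feather N B cr lhe rhe a v" and "\<not> feather N B cr lhe rhe b v"
  shows "nested S i a b"
proof -
  interpret FT S N B cr lhe rhe using deriv_INV[OF assms(2)] by unfold_locales
  have vN: "v \<in> N" using assms(3) tleaves_sub by blast
  have ia: "inblk N B a v" and ib: "inblk N B b v" using vN assms(6,7,8) by (auto simp: inblk_def)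
  have "NESTL v a b" using core[OF assms(3) ia ib assms(9) assms(10-15)] .
  then show ?thesis using NESTL_nested[OF assms(4,5)] assms(9) by blast
qed


end
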